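(* Let $V$ be a continuous and concave capacity on $(\Omega,\mathcal{F})$ with conjugate capacity $v$, let $\theta:\Omega\to\Omega$ be a measurable map that preserves $V$ and is ergodic with respect to $V$, and let $\xi$ be a bounded $\mathcal{F}$-measurable random variable. Then there is a constant $c$ such that $\lim_{n\to\infty}\frac1n\sum_{k=0}^{n-1}\xi(\theta^{k}\omega)=c$ quasi-surely, and $c\in\left[\int_{\Omega}\xi\, dv,\int_{\Omega}\xi\, dV\right]$.
   Context: A capacity is $V:\mathcal{F}\to[0,1]$ with $V(\emptyset)=0$, $V(\Omega)=1$, monotone. It is concave if $V(A\cup B)+V(A\cap B)\le V(A)+V(B)$ for all $A,B$, and continuous if $V(A_n)\to V(A)$ whenever $A_n\uparrow A$ or $A_n\downarrow A$. The conjugate is $v(A)=1-V(A^c)$. $\theta$ preserves $V$ if $V(\theta^{-1}A)=V(A)$ for all $A$; it is ergodic w.r.t. $V$ if for every $B$ with $\theta^{-1}B=B$: $V(B)\in\{0,1\}$, and $V(B)=0$ or $V(B^c)=0$. "Quasi-surely" means outside a set $A$ with $V(A)=0$. The Choquet integral is $\int_{\Omega}\xi\, d\mu=\int_{0}^{\infty}\mu(\{\xi\ge t\})\,dt+\int_{-\infty}^0[\mu(\{\xi\ge t\})-1]\,dt$. *)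

theory Defs
  imports "HOL-Analysis.Analysis"
begin

definition capacity :: "'a measure \<Rightarrow> ('a set \<Rightarrow> real) \<Rightarrow> bool" where
  "capacity M V \<longleftrightarrow>
     (\<forall>A\<in>sets M. 0 \<le> V A \<and> V A \<le> 1) \<and>
     V {} = 0 \<and> V (space M) = 1 \<and>
     (\<forall>A\<in>sets M. \<forall>B\<in>sets M. A \<subseteq> B \<longrightarrow> V A \<le> V B)"

definition concave_capacity :: "'a measure \<Rightarrow> ('a set \<Rightarrow> real) \<Rightarrow> bool" where
  "concave_capacity M V \<longleftrightarrow>
     (\<forall>A\<in>sets M. \<forall>B\<in>sets M. V (A \<union> B) + V (A \<inter> B) \<le> V A + V B)"

definition continuous_capacity :: "'a measure \<Rightarrow> ('a set \<Rightarrow> real) \<Rightarrow> bool" where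
  "continuous_capacity M V \<longleftrightarrow>
     (\<forall>A. range A \<subseteq> sets M \<longrightarrow> incseq A \<longrightarrow> (\<lambda>n. V (A n)) \<longlonglongrightarrow> V (\<Union>n. A n)) \<and>
     (\<forall>A. range A \<subseteq> sets M \<longrightarrow> decseq A \<longrightarrow> (\<lambda>n. V (A n)) \<longlonglongrightarrow> V (\<Inter>n. A n))"

definition conjugate_capacity :: "'a measure \<Rightarrow> ('a set \<Rightarrow> real) \<Rightarrow> 'a set \<Rightarrow> real" where
  "conjugate_capacity M V A = 1 - V (space M - A)"

definition preserves_capacity :: "'a measure \<Rightarrow> ('a set \<Rightarrow> real) \<Rightarrow> ('a \<Rightarrow> 'a) \<Rightarrow> bool" where
  "preserves_capacity M V \<theta> \<longleftrightarrow> (\<forall>A\<in>sets M. V (\<theta> -` A \<inter> space M) = V A)"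

definition ergodic_capacity :: "'a measure \<Rightarrow> ('a set \<Rightarrow> real) \<Rightarrow> ('a \<Rightarrow> 'a) \<Rightarrow> bool" where
  "ergodic_capacity M V \<theta> \<longleftrightarrow>
     (\<forall>B\<in>sets M. \<theta> -` B \<inter> space M = B \<longrightarrow>
        (V B = 0 \<or> V B = 1) \<and> (V B = 0 \<or> V (space M - B) = 0))"

definition choquet_integral :: "'a measure \<Rightarrow> ('a set \<Rightarrow> real) \<Rightarrow> ('a \<Rightarrow> real) \<Rightarrow> real" where
  "choquet_integral M \<mu> \<xi> =
     (LINT t:{0..}|lborel. \<mu> {\<omega>\<in>space M. \<xi> \<omega> \<ge> t})
   + (LINT t:{..0}|lborel. \<mu> {\<omega>\<in>space M. \<xi> \<omega> \<ge> t} - 1)"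

end

theory Submission
  imports Defs
begin

locale cap =
  fixes M :: "'a measure" and V :: "'a set \<Rightarrow> real" and \<theta> :: "'a \<Rightarrow> 'a"
  assumes cap: "capacity M V"
    and cont: "continuous_capacity M V"
    and conc: "concave_capacity M V"
    and thmeas: "\<theta> \<in> M \<rightarrow>\<^sub>M M"
    and pres: "preserves_capacity M V \<theta>"
begin

lemma V_nonneg: "A \<in> sets M \<Longrightarrow> 0 \<le> V A"
  using cap unfolding capacity_def by auto
lemma V_le1: "A \<in> sets M \<Longrightarrow> V A \<le> 1"
  using cap unfolding capacity_def by auto
lemma V_empty[simp]: "V {} = 0"
  using cap unfolding capacity_def by auto
lemma V_space[simp]: "V (space M) = 1"
  using cap unfolding capacity_def by auto
lemma V_mono: "A \<in> sets M \<Longrightarrow> B \<in> sets M \<Longrightarrow> A \<subseteq> B \<Longrightarrow> V A \<le> V B"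
  using cap unfolding capacity_def by auto
lemma V_conc: "A \<in> sets M \<Longrightarrow> B \<in> sets M \<Longrightarrow> V (A \<union> B) + V (A \<inter> B) \<le> V A + V B"
  using conc unfolding concave_capacity_def by auto
lemma V_subadd: "A \<in> sets M \<Longrightarrow> B \<in> sets M \<Longrightarrow> V (A \<union> B) \<le> V A + V B"
  using V_conc[of A B] V_nonneg[of "A \<inter> B"] by auto

lemma space_ne: "space M \<noteq> {}"
proof
  assume "space M = {}"
  then show False using V_space by simp
qed

lemma V_inc: "range A \<subseteq> sets M \<Longrightarrow> incseq A \<Longrightarrow> (\<lambda>n. V (A n)) \<longlonglongrightarrow> V (\<Union>n. A n)"
  using cont unfolding continuous_capacity_def by auto
lemma V_dec: "range A \<subseteq> sets M \<Longrightarrow> decseq A \<Longrightarrow> (\<lambda>n. V (A n)) \<longlonglongrightarrow> V (\<Inter>n. A n)"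
  using cont unfolding continuous_capacity_def by auto

lemma null_UN_nat:
  fixes N :: "nat \<Rightarrow> 'a set"
  assumes "\<And>n. N n \<in> sets M" "\<And>n. V (N n) = 0"
  shows "V (\<Union>n. N n) = 0"
proof -
  define F where "F k = (\<Union>n<k. N n)" for k
  have Fs: "F k \<in> sets M" for k unfolding F_def using assms(1) by (intro sets.finite_UN) auto
  have F0: "V (F k) = 0" for k
  proof (induction k)
    case 0 then show ?case by (simp add: F_def)
  next
    case (Suc k)
    have "F (Suc k) = F k \<union> N k" unfolding F_def by (auto simp: lessThan_Suc)
    then have "V (F (Suc k)) \<le> V (F k) + V (N k)" using V_subadd[OF Fs assms(1)] by simp
    then show ?case using Suc assms(2)[of k] V_nonneg[OF Fs[of "Suc k"]] by linarith
  qed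
  have "incseq F" by (rule incseq_SucI) (auto simp: F_def lessThan_Suc)
  moreover have "range F \<subseteq> sets M" using Fs by blast
  ultimately have lim: "(\<lambda>k. V (F k)) \<longlonglongrightarrow> V (\<Union>k. F k)" using V_inc by blast
  have eq: "(\<Union>k. F k) = (\<Union>n. N n)"
  proof
    show "(\<Union>k. F k) \<subseteq> (\<Union>n. N n)" unfolding F_def by blast
    show "(\<Union>n. N n) \<subseteq> (\<Union>k. F k)"
    proof
      fix x assume "x \<in> (\<Union>n. N n)"
      then obtain n where "x \<in> N n" by blast
      then have "x \<in> F (Suc n)" unfolding F_def by blast
      then show "x \<in> (\<Union>k. F k)" by blast
    qed
  qed
  have "(\<lambda>k. V (F k)) = (\<lambda>k. 0)" using F0 by simp
  then have "(\<lambda>k. V (F k)) \<longlonglongrightarrow> 0" by simp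
  with lim have "V (\<Union>k. F k) = 0" using LIMSEQ_unique by blast
  then show ?thesis using eq by simp
qed

lemma null_UN_countable:
  assumes "countable I" "I \<noteq> {}" "\<And>i. i \<in> I \<Longrightarrow> N i \<in> sets M" "\<And>i. i \<in> I \<Longrightarrow> V (N i) = 0"
  shows "V (\<Union>i\<in>I. N i) = 0"
proof -
  have "(\<Union>i\<in>I. N i) = (\<Union>n. N (from_nat_into I n))"
    using range_from_nat_into[OF assms(2,1)] by (metis image_image)
  moreover have "V (\<Union>n. N (from_nat_into I n)) = 0"
    using null_UN_nat[of "\<lambda>n. N (from_nat_into I n)"] assms from_nat_into[OF assms(2)] by auto
  ultimately show ?thesis by simp
qed

lemma funpow_meas: "(\<theta> ^^ n) \<in> M \<rightarrow>\<^sub>M M"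
proof (induction n)
  case (Suc n)
  then show ?case using measurable_compose[OF Suc thmeas] by (simp add: comp_def)
qed simp

lemma funpow_space: "\<omega> \<in> space M \<Longrightarrow> (\<theta> ^^ n) \<omega> \<in> space M"
  by (rule measurable_space[OF funpow_meas])

lemma pres_n: "A \<in> sets M \<Longrightarrow> V ((\<theta> ^^ n) -` A \<inter> space M) = V A"
proof (induction n arbitrary: A)
  case 0 then show ?case using sets.sets_into_space by (simp add: Int_absorb2)
next
  case (Suc n)
  have e: "(\<theta> ^^ Suc n) -` A \<inter> space M = (\<theta> ^^ n) -` (\<theta> -` A \<inter> space M) \<inter> space M"
  proof -
    have "(\<theta> ^^ Suc n) x = (\<theta> ^^ n) (\<theta> x)" for x
      by (simp only: funpow_Suc_right comp_def)
    then show ?thesis using measurable_space[OF thmeas] funpow_space by auto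
  qed
  have s: "\<theta> -` A \<inter> space M \<in> sets M" using thmeas Suc.prems by (rule measurable_sets)
  have "V ((\<theta> ^^ Suc n) -` A \<inter> space M) = V ((\<theta> ^^ n) -` (\<theta> -` A \<inter> space M) \<inter> space M)"
    by (subst e) (rule refl)
  also have "\<dots> = V (\<theta> -` A \<inter> space M)" using Suc.IH[OF s] .
  also have "\<dots> = V A" using pres Suc.prems unfolding preserves_capacity_def by blast
  finally show ?case .
qed

subsection \<open>No-arbitrage lemma\<close>

definition cnt :: "'a set list \<Rightarrow> 'a \<Rightarrow> nat" where
  "cnt Bs \<omega> = length (filter (\<lambda>B. \<omega> \<in> B) Bs)"

definition lev :: "'a set list \<Rightarrow> nat \<Rightarrow> 'a set" where
  "lev Bs j = {\<omega>\<in>space M. j \<le> cnt Bs \<omega>}"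

lemma cnt_Cons: "cnt (A # Bs) \<omega> = (if \<omega> \<in> A then 1 else 0) + cnt Bs \<omega>"
  unfolding cnt_def by simp

lemma cnt_le: "cnt Bs \<omega> \<le> length Bs"
  unfolding cnt_def by simp

lemma lev_Cons:
  assumes "A \<subseteq> space M"
  shows "lev (A # Bs) j = lev Bs j \<union> (A \<inter> lev Bs (j - 1))"
proof (intro set_eqI iffI)
  fix x assume "x \<in> lev (A # Bs) j"
  then show "x \<in> lev Bs j \<union> (A \<inter> lev Bs (j - 1))"
    unfolding lev_def cnt_Cons by (cases "x \<in> A") auto
next
  fix x assume "x \<in> lev Bs j \<union> (A \<inter> lev Bs (j - 1))"
  then show "x \<in> lev (A # Bs) j"
    using assms unfolding lev_def cnt_Cons by (cases "x \<in> A") auto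
qed

lemma lev_sets: "set Bs \<subseteq> sets M \<Longrightarrow> lev Bs j \<in> sets M"
proof (induction Bs arbitrary: j)
  case Nil
  then show ?case by (cases j) (auto simp: lev_def cnt_def)
next
  case (Cons A Bs)
  have A: "A \<in> sets M" using Cons by auto
  have "lev (A # Bs) j = lev Bs j \<union> (A \<inter> lev Bs (j - 1))"
    using sets.sets_into_space[OF A] by (rule lev_Cons)
  then show ?case using Cons A by auto
qed

lemma lev_sum: "set Bs \<subseteq> sets M \<Longrightarrow> (\<Sum>j\<in>{1..length Bs}. V (lev Bs j)) \<le> (\<Sum>B\<leftarrow>Bs. V B)"
proof (induction Bs)
  case Nil
  then show ?case by simp
next
  case (Cons A Bs)
  have A: "A \<in> sets M" and Bs: "set Bs \<subseteq> sets M" using Cons.prems by auto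
  define n where "n = length Bs"
  define u where "u j = V (A \<inter> lev Bs j)" for j
  have key: "V (lev (A # Bs) j) \<le> V (lev Bs j) + (u (j - 1) - u j)" if "j \<ge> 1" for j
  proof -
    have e1: "lev (A # Bs) j = lev Bs j \<union> (A \<inter> lev Bs (j - 1))"
      using sets.sets_into_space[OF A] by (rule lev_Cons)
    have e2: "lev Bs j \<inter> (A \<inter> lev Bs (j - 1)) = A \<inter> lev Bs j"
      by (auto simp: lev_def)
    have "V (lev Bs j \<union> (A \<inter> lev Bs (j - 1))) + V (lev Bs j \<inter> (A \<inter> lev Bs (j - 1))) \<le> V (lev Bs j) + V (A \<inter> lev Bs (j - 1))"
      using lev_sets[OF Bs] A by (intro V_conc) auto
    then show ?thesis unfolding e1[symmetric] e2 u_def by simp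
  qed
  have empty: "lev Bs (Suc n) = {}" using cnt_le[of Bs] unfolding lev_def n_def by (auto simp: not_le le_imp_less_Suc)
  have u0: "u 0 = V A" unfolding u_def lev_def using sets.sets_into_space[OF A] by (simp add: Int_absorb2)
  have tel: "(\<Sum>j\<in>{1..Suc n}. u (j - 1) - u j) = u 0 - u (Suc n)"
  proof -
    have "(\<Sum>j\<in>{1..Suc n}. u (j - 1) - u j) = (\<Sum>i<Suc n. u i - u (Suc i))"
      by (rule sum.reindex_bij_witness[of _ Suc "\<lambda>j. j - 1"]) auto
    also have "\<dots> = u 0 - u (Suc n)" using sum_lessThan_telescope'[of u "Suc n"] by simp
    finally show ?thesis .
  qed
  have s1: "(\<Sum>j\<in>{1..Suc n}. V (lev (A # Bs) j)) \<le> (\<Sum>j\<in>{1..Suc n}. V (lev Bs j) + (u (j - 1) - u j))"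
    using key by (intro sum_mono) auto
  have s2: "(\<Sum>j\<in>{1..Suc n}. V (lev Bs j) + (u (j - 1) - u j)) = (\<Sum>j\<in>{1..Suc n}. V (lev Bs j)) + (u 0 - u (Suc n))"
    by (simp only: sum.distrib tel)
  have s3: "(\<Sum>j\<in>{1..Suc n}. V (lev Bs j)) = (\<Sum>j\<in>{1..n}. V (lev Bs j))"
    using empty by simp
  have s4: "u (Suc n) = 0" using empty unfolding u_def by simp
  have "length (A # Bs) = Suc n" unfolding n_def by simp
  then show ?case using s1 s2 s3 s4 u0 Cons.IH[OF Bs] unfolding n_def by simp
qed

lemma noarb_nat:
  assumes Bs: "set Bs \<subseteq> sets M" and k: "\<forall>\<omega>\<in>space M. k \<le> cnt Bs \<omega>"
  shows "real k \<le> (\<Sum>B\<leftarrow>Bs. V B)"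
proof -
  obtain \<omega> where \<omega>: "\<omega> \<in> space M" using space_ne by auto
  have kn: "k \<le> length Bs" using k \<omega> cnt_le order_trans by blast
  have "real k = (\<Sum>j\<in>{1..k}. V (lev Bs j))"
  proof -
    have "lev Bs j = space M" if "j \<in> {1..k}" for j using k that by (auto simp: lev_def)
    then show ?thesis by simp
  qed
  also have "\<dots> \<le> (\<Sum>j\<in>{1..length Bs}. V (lev Bs j))"
    using kn V_nonneg lev_sets[OF Bs] by (intro sum_mono2) auto
  also have "\<dots> \<le> (\<Sum>B\<leftarrow>Bs. V B)" by (rule lev_sum[OF Bs])
  finally show ?thesis .
qed

end

context cap begin

lemma cnt_append: "cnt (xs @ ys) \<omega> = cnt xs \<omega> + cnt ys \<omega>"
  unfolding cnt_def by simp

lemma cnt_replicate: "cnt (replicate n A) \<omega> = (if \<omega> \<in> A then n else 0)"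
  unfolding cnt_def by simp

lemma rep_list_props:
  fixes xs :: "(real \<times> 'a set) list" and D :: real
  defines "Bs \<equiv> concat (map (\<lambda>(l,A). replicate (nat \<lceil>l * D\<rceil>) A) xs)"
  shows "real (cnt Bs \<omega>) = (\<Sum>(l,A)\<leftarrow>xs. real (nat \<lceil>l * D\<rceil>) * indicator A \<omega>)"
    and "(\<Sum>B\<leftarrow>Bs. V B) = (\<Sum>(l,A)\<leftarrow>xs. real (nat \<lceil>l * D\<rceil>) * V A)"
    and "set Bs \<subseteq> (\<Union>(l,A)\<in>set xs. {A})"
  unfolding Bs_def
proof (induction xs)
  case Nil
  { case 1 show ?case by (simp add: cnt_def) }
  { case 2 show ?case by simp }
  { case 3 show ?case by simp }
next
  case (Cons x xs)
  obtain l A where x: "x = (l, A)" by (cases x)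
  { case 1 show ?case using Cons.IH(1) by (simp add: x cnt_append cnt_replicate indicator_def) }
  { case 2 show ?case using Cons.IH(2) by (simp add: x sum_list_replicate) }
  { case 3 show ?case using Cons.IH(3) by (auto simp: x) }
qed

lemma noarb:
  fixes xs :: "(real \<times> 'a set) list"
  assumes xs: "\<forall>(l,A)\<in>set xs. 0 \<le> l \<and> A \<in> sets M"
    and k: "\<forall>\<omega>\<in>space M. k \<le> (\<Sum>(l,A)\<leftarrow>xs. l * indicator A \<omega>)"
  shows "k \<le> (\<Sum>(l,A)\<leftarrow>xs. l * V A)"
proof (rule ccontr)
  define cost where "cost = (\<Sum>(l,A)\<leftarrow>xs. l * V A)"
  define len where "len = real (length xs)"
  assume "\<not> k \<le> (\<Sum>(l,A)\<leftarrow>xs. l * V A)"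
  then have lt: "cost < k" unfolding cost_def by simp
  obtain D0 :: nat where D0: "len / (k - cost) < real D0" using reals_Archimedean2 by blast
  define D where "D = real (Suc D0)"
  have Dpos: "D > 0" unfolding D_def by simp
  have DD: "len < D * (k - cost)"
  proof -
    have "len / (k - cost) < D" using D0 unfolding D_def by simp
    then show ?thesis using lt by (simp add: field_simps)
  qed
  define Bs where "Bs = concat (map (\<lambda>(l,A). replicate (nat \<lceil>l * D\<rceil>) A) xs)"
  have Bs_sets: "set Bs \<subseteq> sets M"
    using rep_list_props(3)[of D xs] xs unfolding Bs_def by fastforce
  define kk where "kk = nat \<lceil>D * k\<rceil>"
  have cnt_ge: "D * (\<Sum>(l,A)\<leftarrow>xs. l * indicator A \<omega>) \<le> real (cnt Bs \<omega>)" for \<omega>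
  proof -
    have "D * (\<Sum>(l,A)\<leftarrow>xs. l * indicator A \<omega>) = (\<Sum>(l,A)\<leftarrow>xs. (l * D) * indicator A \<omega>)"
      by (induction xs) (auto simp: algebra_simps)
    also have "\<dots> \<le> (\<Sum>(l,A)\<leftarrow>xs. real (nat \<lceil>l * D\<rceil>) * indicator A \<omega>)"
    proof (intro sum_list_mono)
      fix x assume "x \<in> set xs"
      obtain l A where x: "x = (l, A)" by (cases x)
      have "l * D \<le> real (nat \<lceil>l * D\<rceil>)" by linarith
      then show "(case x of (l, A) \<Rightarrow> l * D * indicator A \<omega>) \<le> (case x of (l, A) \<Rightarrow> real (nat \<lceil>l * D\<rceil>) * indicator A \<omega>)"
        by (simp add: x indicator_def)
    qed
    also have "\<dots> = real (cnt Bs \<omega>)" using rep_list_props(1)[of D xs \<omega>] unfolding Bs_def by simp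
    finally show ?thesis .
  qed
  have kk_le: "\<forall>\<omega>\<in>space M. kk \<le> cnt Bs \<omega>"
  proof
    fix \<omega> assume "\<omega> \<in> space M"
    then have "k \<le> (\<Sum>(l,A)\<leftarrow>xs. l * indicator A \<omega>)" using k by blast
    then have "D * k \<le> D * (\<Sum>(l,A)\<leftarrow>xs. l * indicator A \<omega>)" using Dpos by simp
    then have "D * k \<le> real (cnt Bs \<omega>)" using cnt_ge[of \<omega>] by linarith
    then show "kk \<le> cnt Bs \<omega>" unfolding kk_def by (simp add: nat_le_iff ceiling_le_iff)
  qed
  have "D * k \<le> real kk" unfolding kk_def by linarith
  also have "real kk \<le> (\<Sum>B\<leftarrow>Bs. V B)" by (rule noarb_nat[OF Bs_sets kk_le])
  also have "\<dots> = (\<Sum>(l,A)\<leftarrow>xs. real (nat \<lceil>l * D\<rceil>) * V A)" using rep_list_props(2)[of D xs] unfolding Bs_def by simp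
  also have "\<dots> \<le> (\<Sum>(l,A)\<leftarrow>xs. D * (l * V A) + 1)"
  proof (intro sum_list_mono)
    fix x assume xin: "x \<in> set xs"
    obtain l A where x: "x = (l, A)" by (cases x)
    have l: "0 \<le> l" and A: "A \<in> sets M" using xs xin x by auto
    have ld: "0 \<le> l * D" using l Dpos by simp
    have "real (nat \<lceil>l * D\<rceil>) = real_of_int \<lceil>l * D\<rceil>" using ld by simp
    also have "\<dots> \<le> l * D + 1" by (rule of_int_ceiling_le_add_one)
    finally have "real (nat \<lceil>l * D\<rceil>) \<le> l * D + 1" .
    moreover have "0 \<le> V A" "V A \<le> 1" using V_nonneg[OF A] V_le1[OF A] by auto
    ultimately have "real (nat \<lceil>l * D\<rceil>) * V A \<le> (l * D + 1) * V A" by (intro mult_right_mono) auto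
    also have "\<dots> \<le> D * (l * V A) + 1" using \<open>V A \<le> 1\<close> by (simp add: algebra_simps)
    finally show "(case x of (l, A) \<Rightarrow> real (nat \<lceil>l * D\<rceil>) * V A) \<le> (case x of (l, A) \<Rightarrow> D * (l * V A) + 1)"
      by (simp add: x)
  qed
  also have "\<dots> = D * cost + len"
    unfolding cost_def len_def by (induction xs) (auto simp: algebra_simps)
  finally have "D * k \<le> D * cost + len" .
  then show False using DD by (simp add: algebra_simps)
qed

end

lemma hahn_banach_fun:
  fixes S :: "('a \<Rightarrow> real) set" and p :: "('a \<Rightarrow> real) \<Rightarrow> real"
  assumes S0: "(\<lambda>_. 0) \<in> S"
    and Sadd: "\<And>f g. f \<in> S \<Longrightarrow> g \<in> S \<Longrightarrow> (\<lambda>x. f x + g x) \<in> S"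
    and Ssc: "\<And>f r. f \<in> S \<Longrightarrow> (\<lambda>x. r * f x) \<in> S"
    and padd: "\<And>f g. f \<in> S \<Longrightarrow> g \<in> S \<Longrightarrow> p (\<lambda>x. f x + g x) \<le> p f + p g"
    and psc: "\<And>f r. f \<in> S \<Longrightarrow> r > 0 \<Longrightarrow> p (\<lambda>x. r * f x) = r * p f"
  shows "\<exists>L. (\<forall>f\<in>S. \<forall>g\<in>S. L (\<lambda>x. f x + g x) = L f + L g) \<and> (\<forall>f\<in>S. \<forall>r. L (\<lambda>x. r * f x) = r * L f)
             \<and> (\<forall>f\<in>S. L f \<le> p f)"
proof -
  have p0: "p (\<lambda>_. 0) = 0"
  proof -
    have "p (\<lambda>x. 2 * (0::real)) = 2 * p (\<lambda>_. 0)" using psc[OF S0, of 2] by simp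
    then show ?thesis by simp
  qed
  have Sdiff: "(\<lambda>x. f x - g x) \<in> S" if "f \<in> S" "g \<in> S" for f g
  proof -
    have "(\<lambda>x. f x + (-1) * g x) \<in> S" using that Sadd Ssc by blast
    then show ?thesis by simp
  qed
  define good where "good G \<longleftrightarrow> G \<subseteq> S \<times> UNIV \<and> ((\<lambda>_. 0), 0) \<in> G
     \<and> (\<forall>f a g b. (f,a) \<in> G \<longrightarrow> (g,b) \<in> G \<longrightarrow> ((\<lambda>x. f x + g x), a + b) \<in> G)
     \<and> (\<forall>f a r. (f,a) \<in> G \<longrightarrow> ((\<lambda>x. r * f x), r * a) \<in> G)
     \<and> (\<forall>f a. (f,a) \<in> G \<longrightarrow> a \<le> p f)" for G :: "(('a \<Rightarrow> real) \<times> real) set"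
  have "\<exists>G\<in>Collect good. \<forall>X\<in>Collect good. G \<subseteq> X \<longrightarrow> X = G"
  proof (rule Zorn_Lemma2, intro ballI)
    fix C assume C: "C \<in> chains (Collect good)"
    show "\<exists>U\<in>Collect good. \<forall>X\<in>C. X \<subseteq> U"
    proof (cases "C = {}")
      case True
      have "good {((\<lambda>_. 0), 0)}" unfolding good_def using S0 p0 by auto
      then show ?thesis using True by auto
    next
      case False
      have Cg: "\<And>X. X \<in> C \<Longrightarrow> good X" using chainsD2[OF C] by auto
      have "good (\<Union>C)" unfolding good_def
      proof (intro conjI allI impI)
        show "\<Union>C \<subseteq> S \<times> UNIV" using Cg unfolding good_def by blast
        show "((\<lambda>_. 0), 0) \<in> \<Union>C" using Cg False unfolding good_def by blast
      next
        fix f a g b assume fa: "(f,a) \<in> \<Union>C" and gb: "(g,b) \<in> \<Union>C"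
        then obtain X Y where X: "X \<in> C" "(f,a) \<in> X" and Y: "Y \<in> C" "(g,b) \<in> Y" by blast
        from chainsD[OF C X(1) Y(1)] show "((\<lambda>x. f x + g x), a + b) \<in> \<Union>C"
        proof
          assume "X \<subseteq> Y" then show ?thesis using Cg[OF Y(1)] X Y unfolding good_def by blast
        next
          assume "Y \<subseteq> X" then show ?thesis using Cg[OF X(1)] X Y unfolding good_def by blast
        qed
      next
        fix f a r assume "(f,a) \<in> \<Union>C"
        then obtain X where X: "X \<in> C" "(f,a) \<in> X" by blast
        then show "((\<lambda>x. r * f x), r * a) \<in> \<Union>C" using Cg[OF X(1)] unfolding good_def by blast
      next
        fix f a assume "(f,a) \<in> \<Union>C"
        then obtain X where X: "X \<in> C" "(f,a) \<in> X" by blast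
        then show "a \<le> p f" using Cg[OF X(1)] unfolding good_def by blast
      qed
      then show ?thesis by auto
    qed
  qed
  then obtain G where G: "good G" and Gmax: "\<And>X. good X \<Longrightarrow> G \<subseteq> X \<Longrightarrow> X = G" by auto
  have GS: "(f,a) \<in> G \<Longrightarrow> f \<in> S" for f a using G unfolding good_def by blast
  have G0: "((\<lambda>_. 0), 0) \<in> G" using G unfolding good_def by blast
  have Gadd: "(f,a) \<in> G \<Longrightarrow> (g,b) \<in> G \<Longrightarrow> ((\<lambda>x. f x + g x), a + b) \<in> G" for f a g b
    using G unfolding good_def by blast
  have Gsc: "(f,a) \<in> G \<Longrightarrow> ((\<lambda>x. r * f x), r * a) \<in> G" for f a r
    using G unfolding good_def by blast
  have Gp: "(f,a) \<in> G \<Longrightarrow> a \<le> p f" for f a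
    using G unfolding good_def by blast
  have sv1: "a \<le> b" if "(f,a) \<in> G" "(f,b) \<in> G" for f a b
  proof -
    have "((\<lambda>x. f x + (-1) * f x), a + (-1) * b) \<in> G" using Gadd[OF that(1) Gsc[OF that(2)]] .
    then have "a + (-1) * b \<le> p (\<lambda>x. f x + (-1) * f x)" by (rule Gp)
    then show ?thesis using p0 by simp
  qed
  have sv: "(f,a) \<in> G \<Longrightarrow> (f,b) \<in> G \<Longrightarrow> a = b" for f a b
    using sv1[of f a b] sv1[of f b a] by linarith
  have dom: "\<exists>a. (f,a) \<in> G" if f0S: "f \<in> S" for f
  proof (rule ccontr)
    assume nf: "\<nexists>a. (f, a) \<in> G"
    define Lw where "Lw = {a - p (\<lambda>x. g x - f x) | g a. (g,a) \<in> G}"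
    have key: "a - p (\<lambda>x. g x - f x) \<le> p (\<lambda>x. h x + f x) - b" if "(g,a) \<in> G" "(h,b) \<in> G" for g a h b
    proof -
      have "a + b \<le> p (\<lambda>x. g x + h x)" using Gp[OF Gadd[OF that]] .
      also have "(\<lambda>x. g x + h x) = (\<lambda>x. (g x - f x) + (h x + f x))" by simp
      also have "p \<dots> \<le> p (\<lambda>x. g x - f x) + p (\<lambda>x. h x + f x)"
        by (rule padd[OF Sdiff[OF GS[OF that(1)] f0S] Sadd[OF GS[OF that(2)] f0S]])
      finally show ?thesis by simp
    qed
    have Lw_ne: "Lw \<noteq> {}" unfolding Lw_def using G0 by blast
    have "\<forall>y\<in>Lw. y \<le> p (\<lambda>x. 0 + f x) - 0" unfolding Lw_def using key[OF _ G0] by blast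
    then have Lw_bdd: "bdd_above Lw" unfolding bdd_above_def by blast
    define \<alpha> where "\<alpha> = Sup Lw"
    have \<alpha>_ge: "a - p (\<lambda>x. g x - f x) \<le> \<alpha>" if "(g,a) \<in> G" for g a
      unfolding \<alpha>_def using that Lw_bdd by (intro cSup_upper) (auto simp: Lw_def)
    have \<alpha>_le: "\<alpha> \<le> p (\<lambda>x. h x + f x) - b" if "(h,b) \<in> G" for h b
      unfolding \<alpha>_def using Lw_ne key[OF _ that] by (intro cSup_least) (auto simp: Lw_def)
    define G' where "G' = {((\<lambda>x. g x + t * f x), a + t * \<alpha>) | g a t. (g,a) \<in> G}"
    have G'I: "((\<lambda>x. g x + t * f x), a + t * \<alpha>) \<in> G'" if "(g,a) \<in> G" for g a t
      unfolding G'_def using that by blast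
    have G'E: "\<exists>g a t. h = (\<lambda>x. g x + t * f x) \<and> b = a + t * \<alpha> \<and> (g,a) \<in> G" if "(h,b) \<in> G'" for h b
      using that unfolding G'_def by blast
    have bound: "a + t * \<alpha> \<le> p (\<lambda>x. g x + t * f x)" if ga: "(g,a) \<in> G" for g a t
    proof (cases t "0::real" rule: linorder_cases)
      case greater
      have "((\<lambda>x. (1/t) * g x), (1/t) * a) \<in> G" using Gsc[OF ga] .
      from \<alpha>_le[OF this] have "\<alpha> \<le> p (\<lambda>x. (1/t) * g x + f x) - (1/t) * a" .
      then have "t * \<alpha> \<le> t * p (\<lambda>x. (1/t) * g x + f x) - a" using greater
        by (simp add: field_simps)
      also have "t * p (\<lambda>x. (1/t) * g x + f x) = p (\<lambda>x. t * ((1/t) * g x + f x))"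
        using greater GS[OF ga] f0S by (intro psc[symmetric] Sadd Ssc) auto
      also have "(\<lambda>x. t * ((1/t) * g x + f x)) = (\<lambda>x. g x + t * f x)"
        using greater by (intro ext) (simp add: distrib_left)
      finally show ?thesis by simp
    next
      case less
      define s where "s = - t"
      have s: "s > 0" using less s_def by simp
      have "((\<lambda>x. (1/s) * g x), (1/s) * a) \<in> G" using Gsc[OF ga] .
      from \<alpha>_ge[OF this] have "(1/s) * a - p (\<lambda>x. (1/s) * g x - f x) \<le> \<alpha>" .
      then have "a - s * p (\<lambda>x. (1/s) * g x - f x) \<le> s * \<alpha>" using s
        by (simp add: field_simps)
      moreover have "s * p (\<lambda>x. (1/s) * g x - f x) = p (\<lambda>x. s * ((1/s) * g x - f x))"
        using s GS[OF ga] f0S by (intro psc[symmetric] Sdiff Ssc) auto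
      moreover have "(\<lambda>x. s * ((1/s) * g x - f x)) = (\<lambda>x. g x + t * f x)"
        using s unfolding s_def by (intro ext) (simp add: right_diff_distrib)
      ultimately show ?thesis unfolding s_def by simp
    next
      case equal
      then show ?thesis using Gp[OF ga] by simp
    qed
    have "good G'" unfolding good_def
    proof (intro conjI allI impI)
      show "G' \<subseteq> S \<times> UNIV"
      proof
        fix x assume "x \<in> G'"
        moreover obtain h b where x: "x = (h, b)" by (cases x)
        ultimately obtain g a t where "h = (\<lambda>x. g x + t * f x)" "(g,a) \<in> G" using G'E by blast
        then have "h \<in> S" using Sadd[OF GS Ssc[OF f0S]] by blast
        then show "x \<in> S \<times> UNIV" using x by simp
      qed
      have "((\<lambda>x. 0 + 0 * f x), 0 + 0 * \<alpha>) \<in> G'" by (rule G'I[OF G0])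
      then show "((\<lambda>_. 0), 0) \<in> G'" by simp
    next
      fix h1 a1 h2 a2 assume "(h1,a1) \<in> G'" "(h2,a2) \<in> G'"
      then obtain g1 b1 t1 g2 b2 t2 where 1: "h1 = (\<lambda>x. g1 x + t1 * f x)" "a1 = b1 + t1 * \<alpha>" "(g1,b1) \<in> G"
        and 2: "h2 = (\<lambda>x. g2 x + t2 * f x)" "a2 = b2 + t2 * \<alpha>" "(g2,b2) \<in> G"
        using G'E by meson
      have "((\<lambda>x. (\<lambda>x. g1 x + g2 x) x + (t1 + t2) * f x), (b1 + b2) + (t1 + t2) * \<alpha>) \<in> G'"
        by (rule G'I[OF Gadd[OF 1(3) 2(3)]])
      moreover have "(\<lambda>x. (\<lambda>x. g1 x + g2 x) x + (t1 + t2) * f x) = (\<lambda>x. h1 x + h2 x)"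
        unfolding 1 2 by (simp add: algebra_simps)
      moreover have "(b1 + b2) + (t1 + t2) * \<alpha> = a1 + a2" unfolding 1 2 by (simp add: algebra_simps)
      ultimately show "((\<lambda>x. h1 x + h2 x), a1 + a2) \<in> G'" by simp
    next
      fix h1 a1 r assume "(h1,a1) \<in> G'"
      then obtain g1 b1 t1 where 1: "h1 = (\<lambda>x. g1 x + t1 * f x)" "a1 = b1 + t1 * \<alpha>" "(g1,b1) \<in> G"
        using G'E by meson
      have "((\<lambda>x. (\<lambda>x. r * g1 x) x + (r * t1) * f x), r * b1 + (r * t1) * \<alpha>) \<in> G'"
        by (rule G'I[OF Gsc[OF 1(3)]])
      moreover have "(\<lambda>x. (\<lambda>x. r * g1 x) x + (r * t1) * f x) = (\<lambda>x. r * h1 x)"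
        unfolding 1 by (simp add: algebra_simps)
      moreover have "r * b1 + (r * t1) * \<alpha> = r * a1" unfolding 1 by (simp add: algebra_simps)
      ultimately show "((\<lambda>x. r * h1 x), r * a1) \<in> G'" by simp
    next
      fix h1 a1 assume "(h1,a1) \<in> G'"
      then obtain g1 b1 t1 where 1: "h1 = (\<lambda>x. g1 x + t1 * f x)" "a1 = b1 + t1 * \<alpha>" "(g1,b1) \<in> G"
        using G'E by meson
      show "a1 \<le> p h1" unfolding 1 using bound[OF 1(3)] .
    qed
    moreover have "G \<subseteq> G'"
    proof
      fix x assume "x \<in> G"
      moreover obtain g a where "x = (g, a)" by (cases x)
      ultimately have "((\<lambda>y. g y + 0 * f y), a + 0 * \<alpha>) \<in> G'" using G'I by blast
      then show "x \<in> G'" using \<open>x = (g,a)\<close> by simp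
    qed
    ultimately have "G' = G" using Gmax by blast
    moreover have "((\<lambda>x. 0 + 1 * f x), 0 + 1 * \<alpha>) \<in> G'" by (rule G'I[OF G0])
    ultimately have "(f, \<alpha>) \<in> G" by simp
    then show False using nf by blast
  qed
  define L where "L f = (THE a. (f,a) \<in> G)" for f
  have LG: "(f, L f) \<in> G" if fS: "f \<in> S" for f
  proof -
    obtain a where a: "(f,a) \<in> G" using dom[OF fS] by blast
    have "L f = a" unfolding L_def using a sv by blast
    then show ?thesis using a by simp
  qed
  show ?thesis
  proof (intro exI[of _ L] conjI ballI allI)
    fix f g assume f: "f \<in> S" and g: "g \<in> S"
    show "L (\<lambda>x. f x + g x) = L f + L g"
      using sv[OF LG[OF Sadd[OF f g]] Gadd[OF LG[OF f] LG[OF g]]] .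
  next
    fix f r assume f: "f \<in> S"
    show "L (\<lambda>x. r * f x) = r * L f"
      using sv[OF LG[OF Ssc[OF f]] Gsc[OF LG[OF f]]] .
  next
    fix f assume f: "f \<in> S"
    show "L f \<le> p f" using Gp[OF LG[OF f]] .
  qed
qed

context cap begin

definition isrep :: "('a \<Rightarrow> real) \<Rightarrow> real \<Rightarrow> (real \<times> 'a set) list \<Rightarrow> bool" where
  "isrep f c xs \<longleftrightarrow> (\<forall>(l,A)\<in>set xs. 0 \<le> l \<and> A \<in> sets M) \<and>
     (\<forall>\<omega>\<in>space M. f \<omega> \<le> c + (\<Sum>(l,A)\<leftarrow>xs. l * indicator A \<omega>))"

definition cost :: "real \<Rightarrow> (real \<times> 'a set) list \<Rightarrow> real" where
  "cost c xs = c + (\<Sum>(l,A)\<leftarrow>xs. l * V A)"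

definition Sn :: "nat \<Rightarrow> ('a \<Rightarrow> real) \<Rightarrow> 'a \<Rightarrow> real" where
  "Sn n f \<omega> = (\<Sum>k<n. f ((\<theta> ^^ k) \<omega>))"

definition R :: "('a \<Rightarrow> real) \<Rightarrow> real set" where
  "R f = {cost c xs / real n | n c xs. n \<ge> 1 \<and> isrep (Sn n f) c xs}"

definition pp :: "('a \<Rightarrow> real) \<Rightarrow> real" where
  "pp f = Inf (R f)"

definition BS :: "('a \<Rightarrow> real) set" where
  "BS = {f. \<exists>B. \<forall>\<omega>\<in>space M. \<bar>f \<omega>\<bar> \<le> B}"

definition shift :: "nat \<Rightarrow> (real \<times> 'a set) list \<Rightarrow> (real \<times> 'a set) list" where
  "shift k xs = map (\<lambda>(l,A). (l, (\<theta> ^^ k) -` A \<inter> space M)) xs"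

lemma isrep_mono: "isrep f c xs \<Longrightarrow> (\<And>\<omega>. \<omega> \<in> space M \<Longrightarrow> g \<omega> \<le> f \<omega>) \<Longrightarrow> isrep g c xs"
  unfolding isrep_def by (meson order_trans)

lemma isrep_add:
  assumes "isrep f c xs" "isrep g d ys"
  shows "isrep (\<lambda>\<omega>. f \<omega> + g \<omega>) (c + d) (xs @ ys)"
proof -
  have "f \<omega> + g \<omega> \<le> (c + (\<Sum>(l,A)\<leftarrow>xs. l * indicator A \<omega>)) + (d + (\<Sum>(l,A)\<leftarrow>ys. l * indicator A \<omega>))"
    if "\<omega> \<in> space M" for \<omega>
    using assms that unfolding isrep_def by (intro add_mono) auto
  then show ?thesis using assms unfolding isrep_def by (auto simp: algebra_simps)
qed

lemma cost_append: "cost (c + d) (xs @ ys) = cost c xs + cost d ys"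
  unfolding cost_def by simp

lemma isrep_shift:
  assumes "isrep f c xs"
  shows "isrep (\<lambda>\<omega>. f ((\<theta> ^^ k) \<omega>)) c (shift k xs)"
proof -
  have 1: "\<forall>(l,A)\<in>set (shift k xs). 0 \<le> l \<and> A \<in> sets M"
    using assms measurable_sets[OF funpow_meas] unfolding isrep_def shift_def by auto
  have "(\<Sum>(l,A)\<leftarrow>shift k xs. l * indicator A \<omega>) = (\<Sum>(l,A)\<leftarrow>xs. l * indicator A ((\<theta> ^^ k) \<omega>))"
    if "\<omega> \<in> space M" for \<omega>
    unfolding shift_def using that by (induction xs) (auto simp: indicator_def)
  then show ?thesis using assms 1 funpow_space unfolding isrep_def by auto
qed

lemma cost_shift:
  assumes "isrep f c xs"
  shows "cost c (shift k xs) = cost c xs"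
proof -
  have "\<forall>(l,A)\<in>set xs. A \<in> sets M" using assms unfolding isrep_def by auto
  then have "(\<Sum>(l,A)\<leftarrow>shift k xs. l * V A) = (\<Sum>(l,A)\<leftarrow>xs. l * V A)"
    unfolding shift_def by (induction xs) (auto simp: pres_n)
  then show ?thesis unfolding cost_def by simp
qed

lemma isrep_sum:
  assumes "\<And>j. j < m \<Longrightarrow> isrep (F j) (C j) (X j)"
  shows "isrep (\<lambda>\<omega>. \<Sum>j<m. F j \<omega>) (\<Sum>j<m. C j) (concat (map X [0..<m]))
     \<and> cost (\<Sum>j<m. C j) (concat (map X [0..<m])) = (\<Sum>j<m. cost (C j) (X j))"
  using assms
proof (induction m)
  case 0
  then show ?case unfolding isrep_def cost_def by simp
next
  case (Suc m)
  have IH: "isrep (\<lambda>\<omega>. \<Sum>j<m. F j \<omega>) (\<Sum>j<m. C j) (concat (map X [0..<m]))"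
    "cost (\<Sum>j<m. C j) (concat (map X [0..<m])) = (\<Sum>j<m. cost (C j) (X j))"
    using Suc by auto
  have "isrep (\<lambda>\<omega>. (\<Sum>j<m. F j \<omega>) + F m \<omega>) ((\<Sum>j<m. C j) + C m) (concat (map X [0..<m]) @ X m)"
    using isrep_add[OF IH(1) Suc.prems[of m]] by simp
  moreover have "cost ((\<Sum>j<m. C j) + C m) (concat (map X [0..<m]) @ X m) = (\<Sum>j<m. cost (C j) (X j)) + cost (C m) (X m)"
    using cost_append IH(2) by simp
  ultimately show ?case by simp
qed

lemma isrep_scale:
  assumes "isrep f c xs" "0 \<le> t"
  shows "isrep (\<lambda>\<omega>. t * f \<omega>) (t * c) (map (\<lambda>(l,A). (t * l, A)) xs)
       \<and> cost (t * c) (map (\<lambda>(l,A). (t * l, A)) xs) = t * cost c xs"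
proof -
  have s1: "(\<Sum>(l,A)\<leftarrow>map (\<lambda>(l,A). (t * l, A)) xs. l * indicator A \<omega>) = t * (\<Sum>(l,A)\<leftarrow>xs. l * indicator A \<omega>)" for \<omega>
    by (induction xs) (auto simp: algebra_simps)
  have s2: "(\<Sum>(l,A)\<leftarrow>map (\<lambda>(l,A). (t * l, A)) xs. l * V A) = t * (\<Sum>(l,A)\<leftarrow>xs. l * V A)"
    by (induction xs) (auto simp: algebra_simps)
  have "t * f \<omega> \<le> t * c + t * (\<Sum>(l,A)\<leftarrow>xs. l * indicator A \<omega>)" if "\<omega> \<in> space M" for \<omega>
  proof -
    have "f \<omega> \<le> c + (\<Sum>(l,A)\<leftarrow>xs. l * indicator A \<omega>)" using assms(1) that unfolding isrep_def by auto
    then have "t * f \<omega> \<le> t * (c + (\<Sum>(l,A)\<leftarrow>xs. l * indicator A \<omega>))" using assms(2) by (rule mult_left_mono)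
    then show ?thesis by (simp add: algebra_simps)
  qed
  moreover have "\<forall>(l,A)\<in>set (map (\<lambda>(l,A). (t * l, A)) xs). 0 \<le> l \<and> A \<in> sets M"
    using assms unfolding isrep_def by auto
  ultimately show ?thesis unfolding isrep_def cost_def using s1 s2 by (simp add: algebra_simps)
qed

lemma cost_lower:
  assumes "isrep f c xs" "\<And>\<omega>. \<omega> \<in> space M \<Longrightarrow> m \<le> f \<omega>"
  shows "m \<le> cost c xs"
proof -
  have "m - c \<le> (\<Sum>(l,A)\<leftarrow>xs. l * V A)"
  proof (rule noarb)
    show "\<forall>(l,A)\<in>set xs. 0 \<le> l \<and> A \<in> sets M" using assms(1) unfolding isrep_def by auto
    show "\<forall>\<omega>\<in>space M. m - c \<le> (\<Sum>(l,A)\<leftarrow>xs. l * indicator A \<omega>)"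
    proof
      fix \<omega> assume w: "\<omega> \<in> space M"
      have "f \<omega> \<le> c + (\<Sum>(l,A)\<leftarrow>xs. l * indicator A \<omega>)" using assms(1) w unfolding isrep_def by blast
      then show "m - c \<le> (\<Sum>(l,A)\<leftarrow>xs. l * indicator A \<omega>)" using assms(2)[OF w] by linarith
    qed
  qed
  then show ?thesis unfolding cost_def by simp
qed

subsection \<open>Birkhoff sums\<close>

lemma Sn_add: "Sn (a + b) f \<omega> = Sn a f \<omega> + Sn b f ((\<theta> ^^ a) \<omega>)"
proof (induction b)
  case 0 then show ?case by (simp add: Sn_def)
next
  case (Suc b)
  have "Sn (a + Suc b) f \<omega> = Sn (a + b) f \<omega> + f ((\<theta> ^^ (a + b)) \<omega>)"
    unfolding Sn_def by simp
  moreover have "Sn (Suc b) f ((\<theta> ^^ a) \<omega>) = Sn b f ((\<theta> ^^ a) \<omega>) + f ((\<theta> ^^ b) ((\<theta> ^^ a) \<omega>))"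
    unfolding Sn_def by simp
  moreover have "(\<theta> ^^ b) ((\<theta> ^^ a) \<omega>) = (\<theta> ^^ (a + b)) \<omega>"
    by (simp only: add.commute[of a b] funpow_add comp_def)
  ultimately show ?case using Suc by simp
qed

lemma Sn_mult: "Sn (n * m) f \<omega> = (\<Sum>j<m. Sn n f ((\<theta> ^^ (j * n)) \<omega>))"
proof (induction m)
  case 0 then show ?case by (simp add: Sn_def)
next
  case (Suc m)
  have "Sn (n * Suc m) f \<omega> = Sn (n * m + n) f \<omega>" by (simp add: algebra_simps)
  also have "\<dots> = Sn (n * m) f \<omega> + Sn n f ((\<theta> ^^ (n * m)) \<omega>)" by (rule Sn_add)
  finally show ?case using Suc by (simp add: mult.commute)
qed

lemma Sn_plus: "Sn n (\<lambda>\<omega>. f \<omega> + g \<omega>) \<omega> = Sn n f \<omega> + Sn n g \<omega>"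
  unfolding Sn_def by (simp add: sum.distrib)

lemma Sn_scale: "Sn n (\<lambda>\<omega>. t * f \<omega>) \<omega> = t * Sn n f \<omega>"
  unfolding Sn_def by (simp add: sum_distrib_left)

lemma Sn_one[simp]: "Sn 1 f \<omega> = f \<omega>" "Sn (Suc 0) f \<omega> = f \<omega>"
  unfolding Sn_def by simp_all

lemma Sn_Suc: "Sn (Suc n) f \<omega> = f \<omega> + Sn n f (\<theta> \<omega>)"
  unfolding Sn_def by (simp only: sum.lessThan_Suc_shift funpow_Suc_right comp_def funpow_0)

lemma Sn_lower:
  assumes "\<And>\<omega>. \<omega> \<in> space M \<Longrightarrow> m \<le> f \<omega>" "\<omega> \<in> space M"
  shows "real n * m \<le> Sn n f \<omega>"
proof -
  have "(\<Sum>k<n. m) \<le> (\<Sum>k<n. f ((\<theta> ^^ k) \<omega>))"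
    using assms funpow_space by (intro sum_mono) auto
  then show ?thesis unfolding Sn_def by simp
qed

lemma Sn_upper:
  assumes "\<And>\<omega>. \<omega> \<in> space M \<Longrightarrow> f \<omega> \<le> m" "\<omega> \<in> space M"
  shows "Sn n f \<omega> \<le> real n * m"
proof -
  have "(\<Sum>k<n. f ((\<theta> ^^ k) \<omega>)) \<le> (\<Sum>k<n. m)"
    using assms funpow_space by (intro sum_mono) auto
  then show ?thesis unfolding Sn_def by simp
qed

lemma BS_I: "(\<And>\<omega>. \<omega> \<in> space M \<Longrightarrow> \<bar>f \<omega>\<bar> \<le> B) \<Longrightarrow> f \<in> BS"
  unfolding BS_def by blast

lemma BS_E: "f \<in> BS \<Longrightarrow> (\<And>B. 0 \<le> B \<Longrightarrow> (\<And>\<omega>. \<omega> \<in> space M \<Longrightarrow> \<bar>f \<omega>\<bar> \<le> B) \<Longrightarrow> P) \<Longrightarrow> P"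
proof -
  assume f: "f \<in> BS" and H: "\<And>B. 0 \<le> B \<Longrightarrow> (\<And>\<omega>. \<omega> \<in> space M \<Longrightarrow> \<bar>f \<omega>\<bar> \<le> B) \<Longrightarrow> P"
  obtain B where B: "\<forall>\<omega>\<in>space M. \<bar>f \<omega>\<bar> \<le> B" using f unfolding BS_def by blast
  show P
  proof (rule H[of "max B 0"])
    show "0 \<le> max B 0" by simp
    fix \<omega> assume "\<omega> \<in> space M"
    then show "\<bar>f \<omega>\<bar> \<le> max B 0" using B by force
  qed
qed

lemma BS_add: "f \<in> BS \<Longrightarrow> g \<in> BS \<Longrightarrow> (\<lambda>x. f x + g x) \<in> BS"
proof -
  assume f: "f \<in> BS" and g: "g \<in> BS"
  obtain B1 where "\<And>\<omega>. \<omega> \<in> space M \<Longrightarrow> \<bar>f \<omega>\<bar> \<le> B1" using f BS_E by blast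
  moreover obtain B2 where "\<And>\<omega>. \<omega> \<in> space M \<Longrightarrow> \<bar>g \<omega>\<bar> \<le> B2" using g BS_E by blast
  ultimately show ?thesis by (intro BS_I[of _ "B1 + B2"]) (smt (verit))
qed

lemma BS_scale: "f \<in> BS \<Longrightarrow> (\<lambda>x. r * f x) \<in> BS"
proof -
  assume f: "f \<in> BS"
  obtain B where "\<And>\<omega>. \<omega> \<in> space M \<Longrightarrow> \<bar>f \<omega>\<bar> \<le> B" using f BS_E by blast
  then show ?thesis by (intro BS_I[of _ "\<bar>r\<bar> * B"]) (auto simp: abs_mult intro: mult_left_mono)
qed

lemma BS_const: "(\<lambda>x. c) \<in> BS"
  by (rule BS_I[of _ "\<bar>c\<bar>"]) simp

lemma BS_ind: "indicator A \<in> BS"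
  by (rule BS_I[of _ 1]) (simp add: indicator_def)

lemma BS_diff: "f \<in> BS \<Longrightarrow> g \<in> BS \<Longrightarrow> (\<lambda>x. f x - g x) \<in> BS"
  using BS_add[of f "\<lambda>x. (-1) * g x"] BS_scale[of g "-1"] by simp

lemma BS_theta: "f \<in> BS \<Longrightarrow> (\<lambda>x. f (\<theta> x)) \<in> BS"
proof -
  assume f: "f \<in> BS"
  obtain B where "\<And>\<omega>. \<omega> \<in> space M \<Longrightarrow> \<bar>f \<omega>\<bar> \<le> B" using f BS_E by blast
  then show ?thesis using measurable_space[OF thmeas] by (intro BS_I[of _ B]) auto
qed

lemma BS_Sn: "f \<in> BS \<Longrightarrow> Sn n f \<in> BS"
proof -
  assume f: "f \<in> BS"
  obtain B where B: "\<And>\<omega>. \<omega> \<in> space M \<Longrightarrow> \<bar>f \<omega>\<bar> \<le> B" using f BS_E by blast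
  have "\<bar>Sn n f \<omega>\<bar> \<le> real n * B" if "\<omega> \<in> space M" for \<omega>
  proof -
    have "\<bar>Sn n f \<omega>\<bar> \<le> (\<Sum>k<n. \<bar>f ((\<theta> ^^ k) \<omega>)\<bar>)" unfolding Sn_def by (rule sum_abs)
    also have "\<dots> \<le> (\<Sum>k<n. B)" using B funpow_space that by (intro sum_mono) auto
    finally show ?thesis by simp
  qed
  then show ?thesis by (rule BS_I)
qed

lemma BS_lower: "f \<in> BS \<Longrightarrow> \<exists>m. \<forall>\<omega>\<in>space M. m \<le> f \<omega>"
  by (metis BS_E abs_le_D2 minus_le_iff)

lemma BS_upper: "f \<in> BS \<Longrightarrow> \<exists>m. \<forall>\<omega>\<in>space M. f \<omega> \<le> m"
  by (metis BS_E abs_le_D1)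

subsection \<open>The sublinear functional\<close>

lemma R_ne: "f \<in> BS \<Longrightarrow> R f \<noteq> {}"
proof -
  assume "f \<in> BS"
  then obtain B where B: "\<forall>\<omega>\<in>space M. f \<omega> \<le> B" using BS_upper by blast
  have "isrep (Sn 1 f) B []" unfolding isrep_def using B by (simp add: Sn_one)
  then have "cost B [] / real 1 \<in> R f" unfolding R_def by blast
  then show ?thesis by blast
qed

lemma R_lower:
  assumes "\<And>\<omega>. \<omega> \<in> space M \<Longrightarrow> m \<le> f \<omega>" "r \<in> R f"
  shows "m \<le> r"
proof -
  obtain n c xs where r: "r = cost c xs / real n" "n \<ge> 1" "isrep (Sn n f) c xs"
    using assms(2) unfolding R_def by blast
  have "\<And>\<omega>. \<omega> \<in> space M \<Longrightarrow> real n * m \<le> Sn n f \<omega>" using Sn_lower[of m f, OF assms(1)] by blast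
  then have 1: "real n * m \<le> cost c xs" using cost_lower[OF r(3)] by blast
  have n0: "real n > 0" using r(2) by simp
  have "m * real n \<le> r * real n" using 1 r(1) n0 by (simp add: mult.commute)
  then show ?thesis using n0 by (simp add: mult_le_cancel_right)
qed

lemma R_bdd: "f \<in> BS \<Longrightarrow> bdd_below (R f)"
  using BS_lower R_lower unfolding bdd_below_def by meson

lemma pp_le: "f \<in> BS \<Longrightarrow> r \<in> R f \<Longrightarrow> pp f \<le> r"
  unfolding pp_def using R_bdd by (intro cInf_lower) auto

lemma pp_ge: "f \<in> BS \<Longrightarrow> (\<And>\<omega>. \<omega> \<in> space M \<Longrightarrow> m \<le> f \<omega>) \<Longrightarrow> m \<le> pp f"
proof -
  assume f: "f \<in> BS" and m: "\<And>\<omega>. \<omega> \<in> space M \<Longrightarrow> m \<le> f \<omega>"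
  have "\<And>r. r \<in> R f \<Longrightarrow> m \<le> r" using R_lower[of m f] m by blast
  then show ?thesis unfolding pp_def using R_ne[OF f] by (intro cInf_greatest) auto
qed

lemma pp_upper: "f \<in> BS \<Longrightarrow> (\<And>\<omega>. \<omega> \<in> space M \<Longrightarrow> f \<omega> \<le> B) \<Longrightarrow> pp f \<le> B"
proof -
  assume f: "f \<in> BS" and B: "\<And>\<omega>. \<omega> \<in> space M \<Longrightarrow> f \<omega> \<le> B"
  have "isrep (Sn 1 f) B []" unfolding isrep_def using B by (simp add: Sn_one)
  then have "cost B [] / real 1 \<in> R f" unfolding R_def by blast
  then show ?thesis using pp_le[OF f] by (simp add: cost_def)
qed

lemma pp_ind: "A \<in> sets M \<Longrightarrow> pp (indicator A) \<le> V A"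
proof -
  assume A: "A \<in> sets M"
  have "isrep (Sn 1 (indicator A)) 0 [(1, A)]" unfolding isrep_def using A by (simp add: Sn_one)
  then have "cost 0 [(1, A)] / real 1 \<in> R (indicator A)" unfolding R_def by blast
  then show ?thesis using pp_le[OF BS_ind] by (simp add: cost_def)
qed

lemma R_add:
  assumes r: "r \<in> R f" and s: "s \<in> R g"
  shows "r + s \<in> R (\<lambda>x. f x + g x)"
proof -
  obtain n c xs where rr: "r = cost c xs / real n" "n \<ge> 1" "isrep (Sn n f) c xs"
    using r unfolding R_def by blast
  obtain m d ys where ss: "s = cost d ys / real m" "m \<ge> 1" "isrep (Sn m g) d ys"
    using s unfolding R_def by blast
  define X where "X j = shift (j * n) xs" for j
  define Y where "Y j = shift (j * m) ys" for j
  have "isrep (\<lambda>\<omega>. \<Sum>j<m. Sn n f ((\<theta> ^^ (j * n)) \<omega>)) (\<Sum>j<m. c) (concat (map X [0..<m]))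
     \<and> cost (\<Sum>j<m. c) (concat (map X [0..<m])) = (\<Sum>j<m. cost c (X j))"
    unfolding X_def by (rule isrep_sum) (rule isrep_shift[OF rr(3)])
  moreover have "(\<Sum>j<m. cost c (X j)) = real m * cost c xs"
    unfolding X_def using cost_shift[OF rr(3)] by simp
  moreover have "Sn (n * m) f = (\<lambda>\<omega>. \<Sum>j<m. Sn n f ((\<theta> ^^ (j * n)) \<omega>))" by (rule ext) (rule Sn_mult)
  ultimately have F: "isrep (Sn (n * m) f) (real m * c) (concat (map X [0..<m]))"
    "cost (real m * c) (concat (map X [0..<m])) = real m * cost c xs"
    by auto
  have "isrep (\<lambda>\<omega>. \<Sum>j<n. Sn m g ((\<theta> ^^ (j * m)) \<omega>)) (\<Sum>j<n. d) (concat (map Y [0..<n]))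
     \<and> cost (\<Sum>j<n. d) (concat (map Y [0..<n])) = (\<Sum>j<n. cost d (Y j))"
    unfolding Y_def by (rule isrep_sum) (rule isrep_shift[OF ss(3)])
  moreover have "(\<Sum>j<n. cost d (Y j)) = real n * cost d ys"
    unfolding Y_def using cost_shift[OF ss(3)] by simp
  moreover have "Sn (m * n) g = (\<lambda>\<omega>. \<Sum>j<n. Sn m g ((\<theta> ^^ (j * m)) \<omega>))" by (rule ext) (rule Sn_mult)
  ultimately have G: "isrep (Sn (m * n) g) (real n * d) (concat (map Y [0..<n]))"
    "cost (real n * d) (concat (map Y [0..<n])) = real n * cost d ys"
    by auto
  have "isrep (\<lambda>\<omega>. Sn (n * m) f \<omega> + Sn (n * m) g \<omega>) (real m * c + real n * d)
          (concat (map X [0..<m]) @ concat (map Y [0..<n]))"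
    using isrep_add[OF F(1) G(1)] by (simp add: mult.commute)
  moreover have "Sn (n * m) (\<lambda>x. f x + g x) = (\<lambda>\<omega>. Sn (n * m) f \<omega> + Sn (n * m) g \<omega>)"
    by (rule ext) (rule Sn_plus)
  ultimately have H: "isrep (Sn (n * m) (\<lambda>x. f x + g x)) (real m * c + real n * d)
          (concat (map X [0..<m]) @ concat (map Y [0..<n]))"
    by simp
  have "cost (real m * c + real n * d) (concat (map X [0..<m]) @ concat (map Y [0..<n]))
      = real m * cost c xs + real n * cost d ys"
    using cost_append F(2) G(2) by simp
  moreover have "(real m * cost c xs + real n * cost d ys) / real (n * m) = r + s"
    using rr ss by (simp add: field_simps)
  moreover have "n * m \<ge> 1" using rr(2) ss(2) by simp
  ultimately have "r + s = cost (real m * c + real n * d) (concat (map X [0..<m]) @ concat (map Y [0..<n])) / real (n * m)"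
    "n * m \<ge> 1" by simp_all
  then show ?thesis using H unfolding R_def by blast
qed

lemma pp_add:
  assumes f: "f \<in> BS" and g: "g \<in> BS"
  shows "pp (\<lambda>x. f x + g x) \<le> pp f + pp g"
proof -
  have fg: "(\<lambda>x. f x + g x) \<in> BS" using BS_add[OF f g] .
  have 1: "pp (\<lambda>x. f x + g x) - s \<le> pp f" if s: "s \<in> R g" for s
  proof -
    have "pp (\<lambda>x. f x + g x) - s \<le> r" if r: "r \<in> R f" for r
      using pp_le[OF fg R_add[OF r s]] by simp
    then show ?thesis unfolding pp_def[of f] using R_ne[OF f] by (intro cInf_greatest) auto
  qed
  have "pp (\<lambda>x. f x + g x) - pp f \<le> s" if "s \<in> R g" for s using 1[OF that] by simp
  then have "pp (\<lambda>x. f x + g x) - pp f \<le> pp g"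
    unfolding pp_def[of g] using R_ne[OF g] by (intro cInf_greatest) auto
  then show ?thesis by simp
qed

lemma R_scale:
  assumes r: "r \<in> R f" and t: "t > 0"
  shows "t * r \<in> R (\<lambda>x. t * f x)"
proof -
  obtain n c xs where rr: "r = cost c xs / real n" "n \<ge> 1" "isrep (Sn n f) c xs"
    using r unfolding R_def by blast
  have "isrep (\<lambda>\<omega>. t * Sn n f \<omega>) (t * c) (map (\<lambda>(l,A). (t * l, A)) xs)
       \<and> cost (t * c) (map (\<lambda>(l,A). (t * l, A)) xs) = t * cost c xs"
    using isrep_scale[OF rr(3)] t by simp
  then have "isrep (Sn n (\<lambda>x. t * f x)) (t * c) (map (\<lambda>(l,A). (t * l, A)) xs)"
    "cost (t * c) (map (\<lambda>(l,A). (t * l, A)) xs) / real n = t * r"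
    using rr(1) by (auto simp: Sn_scale[abs_def])
  then show ?thesis unfolding R_def using rr(2) by (metis (mono_tags, lifting) mem_Collect_eq)
qed

lemma pp_scale_le:
  assumes f: "f \<in> BS" and t: "t > 0"
  shows "pp (\<lambda>x. t * f x) \<le> t * pp f"
proof -
  have tf: "(\<lambda>x. t * f x) \<in> BS" using BS_scale[OF f] .
  have "pp (\<lambda>x. t * f x) / t \<le> r" if "r \<in> R f" for r
    using pp_le[OF tf R_scale[OF that t]] t by (simp add: field_simps)
  then have "pp (\<lambda>x. t * f x) / t \<le> pp f"
    unfolding pp_def[of f] using R_ne[OF f] by (intro cInf_greatest) auto
  then show ?thesis using t by (simp add: field_simps)
qed

lemma pp_scale:
  assumes f: "f \<in> BS" and t: "t > 0"
  shows "pp (\<lambda>x. t * f x) = t * pp f"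
proof -
  have tf: "(\<lambda>x. t * f x) \<in> BS" using BS_scale[OF f] .
  have "pp (\<lambda>x. (1/t) * (t * f x)) \<le> (1/t) * pp (\<lambda>x. t * f x)"
    using pp_scale_le[OF tf, of "1/t"] t by simp
  then have "pp f \<le> (1/t) * pp (\<lambda>x. t * f x)" using t by simp
  then have "t * pp f \<le> pp (\<lambda>x. t * f x)" using t by (simp add: field_simps)
  then show ?thesis using pp_scale_le[OF f t] by simp
qed

lemma pp_inv:
  assumes f: "f \<in> BS"
  shows "pp (\<lambda>\<omega>. f (\<theta> \<omega>) - f \<omega>) \<le> 0"
proof -
  obtain B where B0: "0 \<le> B" and B: "\<And>\<omega>. \<omega> \<in> space M \<Longrightarrow> \<bar>f \<omega>\<bar> \<le> B" using f BS_E by blast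
  have g: "(\<lambda>\<omega>. f (\<theta> \<omega>) - f \<omega>) \<in> BS" using BS_diff[OF BS_theta[OF f] f] .
  have bnd: "pp (\<lambda>\<omega>. f (\<theta> \<omega>) - f \<omega>) \<le> 2 * B / real n" if n: "n \<ge> 1" for n
  proof -
    have "Sn n (\<lambda>\<omega>. f (\<theta> \<omega>) - f \<omega>) \<omega> = f ((\<theta> ^^ n) \<omega>) - f \<omega>" for \<omega>
    proof -
      have "Sn n (\<lambda>\<omega>. f (\<theta> \<omega>) - f \<omega>) \<omega> = (\<Sum>k<n. f ((\<theta> ^^ Suc k) \<omega>) - f ((\<theta> ^^ k) \<omega>))"
        unfolding Sn_def by simp
      also have "\<dots> = f ((\<theta> ^^ n) \<omega>) - f \<omega>"
        using sum_lessThan_telescope[of "\<lambda>k. f ((\<theta> ^^ k) \<omega>)" n] by simp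
      finally show ?thesis .
    qed
    moreover have "f ((\<theta> ^^ n) \<omega>) - f \<omega> \<le> 2 * B" if "\<omega> \<in> space M" for \<omega>
      using B[OF that] B[OF funpow_space[OF that, of n]] by linarith
    ultimately have "isrep (Sn n (\<lambda>\<omega>. f (\<theta> \<omega>) - f \<omega>)) (2 * B) []" unfolding isrep_def by simp
    then have "cost (2 * B) [] / real n \<in> R (\<lambda>\<omega>. f (\<theta> \<omega>) - f \<omega>)" unfolding R_def using n by blast
    then show ?thesis using pp_le[OF g] by (simp add: cost_def)
  qed
  show ?thesis
  proof (rule ccontr)
    assume "\<not> ?thesis"
    then have pos: "pp (\<lambda>\<omega>. f (\<theta> \<omega>) - f \<omega>) > 0" by simp
    obtain n :: nat where n: "2 * B / pp (\<lambda>\<omega>. f (\<theta> \<omega>) - f \<omega>) < real n" using reals_Archimedean2 by blast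
    have "0 \<le> 2 * B / pp (\<lambda>\<omega>. f (\<theta> \<omega>) - f \<omega>)" using pos B0 by simp
    then have "real n > 0" using n by linarith
    then have n1: "n \<ge> 1" by simp
    have "2 * B < real n * pp (\<lambda>\<omega>. f (\<theta> \<omega>) - f \<omega>)" using n pos by (simp add: field_simps)
    moreover have "real n * pp (\<lambda>\<omega>. f (\<theta> \<omega>) - f \<omega>) \<le> 2 * B" using bnd[OF n1] n1 by (simp add: field_simps)
    ultimately show False by simp
  qed
qed

lemma exists_L:
  "\<exists>L. (\<forall>f\<in>BS. \<forall>g\<in>BS. L (\<lambda>x. f x + g x) = L f + L g) \<and> (\<forall>f\<in>BS. \<forall>r. L (\<lambda>x. r * f x) = r * L f)
     \<and> (\<forall>f\<in>BS. L f \<le> pp f)"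
  by (rule hahn_banach_fun) (auto intro: BS_const BS_add BS_scale pp_add pp_scale)

end

locale capL = cap M V \<theta> for M :: "'a measure" and V \<theta> +
  fixes L :: "('a \<Rightarrow> real) \<Rightarrow> real"
  assumes L_add: "f \<in> BS \<Longrightarrow> g \<in> BS \<Longrightarrow> L (\<lambda>x. f x + g x) = L f + L g"
    and L_scale: "f \<in> BS \<Longrightarrow> L (\<lambda>x. r * f x) = r * L f"
    and L_pp: "f \<in> BS \<Longrightarrow> L f \<le> pp f"
begin

lemma L_diff: "f \<in> BS \<Longrightarrow> g \<in> BS \<Longrightarrow> L (\<lambda>x. f x - g x) = L f - L g"
proof -
  assume f: "f \<in> BS" and g: "g \<in> BS"
  have "L (\<lambda>x. f x + (\<lambda>x. (-1) * g x) x) = L f + L (\<lambda>x. (-1) * g x)"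
    using L_add[OF f BS_scale[OF g]] .
  then show ?thesis using L_scale[OF g, of "-1"] by simp
qed

lemma L_upper: "f \<in> BS \<Longrightarrow> (\<And>\<omega>. \<omega> \<in> space M \<Longrightarrow> f \<omega> \<le> B) \<Longrightarrow> L f \<le> B"
  using L_pp pp_upper order_trans by blast

lemma L_lower: "f \<in> BS \<Longrightarrow> (\<And>\<omega>. \<omega> \<in> space M \<Longrightarrow> m \<le> f \<omega>) \<Longrightarrow> m \<le> L f"
proof -
  assume f: "f \<in> BS" and m: "\<And>\<omega>. \<omega> \<in> space M \<Longrightarrow> m \<le> f \<omega>"
  have "L (\<lambda>x. (-1) * f x) \<le> - m"
    using L_upper[OF BS_scale[OF f, of "-1"], of "-m"] m by force
  then show ?thesis using L_scale[OF f, of "-1"] by simp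
qed

lemma L_const: "L (\<lambda>_. c) = c"
  using L_upper[OF BS_const, of c c] L_lower[OF BS_const, of c c] by simp

lemma L_mono: "f \<in> BS \<Longrightarrow> g \<in> BS \<Longrightarrow> (\<And>\<omega>. \<omega> \<in> space M \<Longrightarrow> f \<omega> \<le> g \<omega>) \<Longrightarrow> L f \<le> L g"
proof -
  assume f: "f \<in> BS" and g: "g \<in> BS" and le: "\<And>\<omega>. \<omega> \<in> space M \<Longrightarrow> f \<omega> \<le> g \<omega>"
  have "0 \<le> L (\<lambda>x. g x - f x)" using BS_diff[OF g f] le by (intro L_lower) auto
  then show ?thesis using L_diff[OF g f] by simp
qed

lemma L_cong: "f \<in> BS \<Longrightarrow> g \<in> BS \<Longrightarrow> (\<And>\<omega>. \<omega> \<in> space M \<Longrightarrow> f \<omega> = g \<omega>) \<Longrightarrow> L f = L g"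
  using L_mono by (metis order.antisym order_refl)

lemma L_ind: "A \<in> sets M \<Longrightarrow> L (indicator A) \<le> V A"
  using L_pp[OF BS_ind] pp_ind order_trans by blast

lemma L_theta: "f \<in> BS \<Longrightarrow> L (\<lambda>x. f (\<theta> x)) = L f"
proof -
  assume f: "f \<in> BS"
  have 1: "L (\<lambda>x. f (\<theta> x)) - L f \<le> 0"
    using L_diff[OF BS_theta[OF f] f] L_pp[OF BS_diff[OF BS_theta[OF f] f]] pp_inv[OF f] by simp
  define g where "g = (\<lambda>x. (-1) * f x)"
  have g: "g \<in> BS" unfolding g_def using BS_scale[OF f] .
  have "L (\<lambda>x. g (\<theta> x)) - L g \<le> 0"
    using L_diff[OF BS_theta[OF g] g] L_pp[OF BS_diff[OF BS_theta[OF g] g]] pp_inv[OF g] by simp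
  moreover have "L (\<lambda>x. g (\<theta> x)) = - L (\<lambda>x. f (\<theta> x))"
    unfolding g_def using L_scale[OF BS_theta[OF f], of "-1"] by simp
  moreover have "L g = - L f" unfolding g_def using L_scale[OF f, of "-1"] by simp
  ultimately show ?thesis using 1 by simp
qed

lemma BS_sum: fixes m :: nat shows "(\<And>j. j < m \<Longrightarrow> F j \<in> BS) \<Longrightarrow> (\<lambda>\<omega>. \<Sum>j<m. F j \<omega>) \<in> BS"
proof (induction m)
  case 0 then show ?case using BS_const[of 0] by simp
next
  case (Suc m)
  then show ?case using BS_add[of "\<lambda>\<omega>. \<Sum>j<m. F j \<omega>" "F m"] by simp
qed

lemma L_sum: fixes m :: nat shows "(\<And>j. j < m \<Longrightarrow> F j \<in> BS) \<Longrightarrow> L (\<lambda>\<omega>. \<Sum>j<m. F j \<omega>) = (\<Sum>j<m. L (F j))"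
proof (induction m)
  case 0 then show ?case using L_const[of 0] by simp
next
  case (Suc m)
  have "L (\<lambda>\<omega>. (\<Sum>j<m. F j \<omega>) + F m \<omega>) = L (\<lambda>\<omega>. \<Sum>j<m. F j \<omega>) + L (F m)"
    using Suc.prems by (intro L_add BS_sum) auto
  then show ?case using Suc by simp
qed

lemma Sn_meas: "f \<in> borel_measurable M \<Longrightarrow> Sn n f \<in> borel_measurable M"
proof -
  assume f: "f \<in> borel_measurable M"
  have "(\<lambda>\<omega>. f ((\<theta> ^^ k) \<omega>)) \<in> borel_measurable M" for k
    using measurable_compose[OF funpow_meas f] .
  then show ?thesis unfolding Sn_def[abs_def] by (intro borel_measurable_sum) auto
qed

lemma garsia:
  assumes f: "f \<in> borel_measurable M" and K: "\<And>\<omega>. \<omega> \<in> space M \<Longrightarrow> \<bar>f \<omega>\<bar> \<le> K"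
    and D: "D \<in> sets M" "V (space M - D) = 0" and pos: "\<And>\<omega>. \<omega> \<in> D \<Longrightarrow> \<exists>n. 0 < Sn n f \<omega>"
  shows "0 \<le> L f"
proof -
  obtain \<omega>0 where \<omega>0: "\<omega>0 \<in> space M" using space_ne by blast
  have K0: "0 \<le> K" using K[OF \<omega>0] by linarith
  have fBS: "f \<in> BS" using K by (rule BS_I)
  define Mx where "Mx n \<omega> = Max ((\<lambda>k. Sn k f \<omega>) ` {..n})" for n \<omega>
  define E where "E n = {\<omega>\<in>space M. \<exists>k\<le>n. 0 < Sn k f \<omega>}" for n
  have Smeas[measurable]: "Sn k f \<in> borel_measurable M" for k using Sn_meas[OF f] .
  have Esets: "E n \<in> sets M" for n
  proof -
    have "E n = (\<Union>k\<le>n. {\<omega>\<in>space M. 0 < Sn k f \<omega>})" unfolding E_def by blast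
    moreover have "{\<omega>\<in>space M. 0 < Sn k f \<omega>} \<in> sets M" for k by measurable
    ultimately show ?thesis by auto
  qed
  have Mx_ge: "Sn k f \<omega> \<le> Mx n \<omega>" if "k \<le> n" for k n \<omega>
    unfolding Mx_def using that by (intro Max_ge) auto
  have Mx_in: "\<exists>k\<le>n. Mx n \<omega> = Sn k f \<omega>" for n \<omega>
  proof -
    have "Mx n \<omega> \<in> (\<lambda>k. Sn k f \<omega>) ` {..n}" unfolding Mx_def by (intro Max_in) auto
    then show ?thesis by auto
  qed
  have Sn_abs: "\<bar>Sn k f \<omega>\<bar> \<le> real k * K" if "\<omega> \<in> space M" for k \<omega>
  proof -
    have "\<bar>Sn k f \<omega>\<bar> \<le> (\<Sum>j<k. \<bar>f ((\<theta> ^^ j) \<omega>)\<bar>)" unfolding Sn_def by (rule sum_abs)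
    also have "\<dots> \<le> (\<Sum>j<k. K)" using K funpow_space that by (intro sum_mono) auto
    finally show ?thesis by simp
  qed
  have MxBS: "Mx n \<in> BS" for n
  proof (rule BS_I)
    fix \<omega> assume w: "\<omega> \<in> space M"
    obtain k where k: "k \<le> n" "Mx n \<omega> = Sn k f \<omega>" using Mx_in by blast
    have "real k * K \<le> real n * K" using k(1) K0 by (intro mult_right_mono) auto
    then show "\<bar>Mx n \<omega>\<bar> \<le> real n * K" using Sn_abs[OF w, of k] k(2) by linarith
  qed
  have fE_BS: "(\<lambda>\<omega>. f \<omega> * indicator A \<omega>) \<in> BS" for A
    using K K0 by (intro BS_I[of _ K]) (auto simp: indicator_def)
  have step: "L (\<lambda>\<omega>. f \<omega> * indicator (E n) \<omega>) \<ge> 0" for n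
  proof -
    have pw: "Mx n \<omega> - Mx n (\<theta> \<omega>) \<le> f \<omega> * indicator (E n) \<omega>" if w: "\<omega> \<in> space M" for \<omega>
    proof (cases "\<omega> \<in> E n")
      case True
      then obtain k' where k': "k' \<le> n" "0 < Sn k' f \<omega>" unfolding E_def by blast
      obtain k where k: "k \<le> n" "Mx n \<omega> = Sn k f \<omega>" using Mx_in by blast
      have "0 < Sn k f \<omega>" using Mx_ge[OF k'(1), of \<omega>] k' k by linarith
      then obtain j where j: "k = Suc j" by (cases k) (auto simp: Sn_def)
      have "Mx n \<omega> = f \<omega> + Sn j f (\<theta> \<omega>)" using k(2) j Sn_Suc by simp
      also have "Sn j f (\<theta> \<omega>) \<le> Mx n (\<theta> \<omega>)" using j k(1) by (intro Mx_ge) simp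
      finally show ?thesis using True by simp
    next
      case False
      obtain k where k: "k \<le> n" "Mx n \<omega> = Sn k f \<omega>" using Mx_in by blast
      have "Sn k f \<omega> \<le> 0" using False w k(1) unfolding E_def by force
      moreover have "0 \<le> Mx n (\<theta> \<omega>)" using Mx_ge[of 0 n "\<theta> \<omega>"] by (simp add: Sn_def)
      ultimately show ?thesis using False k(2) by simp
    qed
    have "L (\<lambda>\<omega>. Mx n \<omega> - Mx n (\<theta> \<omega>)) \<le> L (\<lambda>\<omega>. f \<omega> * indicator (E n) \<omega>)"
      using pw by (intro L_mono BS_diff MxBS BS_theta fE_BS) auto
    moreover have "L (\<lambda>\<omega>. Mx n \<omega> - Mx n (\<theta> \<omega>)) = 0"
      using L_diff[OF MxBS BS_theta[OF MxBS]] L_theta[OF MxBS] by simp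
    ultimately show ?thesis by simp
  qed
  have bnd: "- K * V (space M - E n) \<le> L f" for n
  proof -
    have cE: "space M - E n \<in> sets M" using Esets by auto
    have "L f = L (\<lambda>\<omega>. f \<omega> * indicator (E n) \<omega> + f \<omega> * indicator (space M - E n) \<omega>)"
      using Esets[of n] sets.sets_into_space[OF Esets[of n]]
      by (intro L_cong fBS BS_add fE_BS) (auto simp: indicator_def)
    also have "\<dots> = L (\<lambda>\<omega>. f \<omega> * indicator (E n) \<omega>) + L (\<lambda>\<omega>. f \<omega> * indicator (space M - E n) \<omega>)"
      by (intro L_add fE_BS)
    finally have 1: "L f = L (\<lambda>\<omega>. f \<omega> * indicator (E n) \<omega>) + L (\<lambda>\<omega>. f \<omega> * indicator (space M - E n) \<omega>)" .
    have "L (\<lambda>\<omega>. (-K) * indicator (space M - E n) \<omega>) \<le> L (\<lambda>\<omega>. f \<omega> * indicator (space M - E n) \<omega>)"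
    proof (intro L_mono BS_scale BS_ind fE_BS)
      fix \<omega> assume w: "\<omega> \<in> space M"
      show "- K * indicator (space M - E n) \<omega> \<le> f \<omega> * indicator (space M - E n) \<omega>"
        using K[OF w] by (auto simp: indicator_def)
    qed
    moreover have "L (\<lambda>\<omega>. (-K) * indicator (space M - E n) \<omega>) = - K * L (indicator (space M - E n))"
      by (rule L_scale[OF BS_ind])
    moreover have "- K * V (space M - E n) \<le> - K * L (indicator (space M - E n))"
      using L_ind[OF cE] K0 by (simp add: mult_left_mono)
    ultimately show ?thesis using 1 step[of n] by linarith
  qed
  have lim: "(\<lambda>n. V (space M - E n)) \<longlonglongrightarrow> V (\<Inter>n. space M - E n)"
  proof (rule V_dec)
    show "range (\<lambda>n. space M - E n) \<subseteq> sets M" using Esets by auto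
    show "decseq (\<lambda>n. space M - E n)"
      unfolding decseq_def E_def by (auto intro: order_trans)
  qed
  have "V (\<Inter>n. space M - E n) = 0"
  proof -
    have sub: "(\<Inter>n. space M - E n) \<subseteq> space M - D"
    proof
      fix \<omega> assume w: "\<omega> \<in> (\<Inter>n. space M - E n)"
      then have ws: "\<omega> \<in> space M" by auto
      show "\<omega> \<in> space M - D"
      proof (rule ccontr)
        assume "\<omega> \<notin> space M - D"
        then have "\<omega> \<in> D" using ws by blast
        then obtain k where "0 < Sn k f \<omega>" using pos by blast
        then have "\<omega> \<in> E k" unfolding E_def using ws by blast
        then show False using w by blast
      qed
    qed
    have s1: "(\<Inter>n. space M - E n) \<in> sets M" using Esets by auto
    have "V (\<Inter>n. space M - E n) \<le> V (space M - D)" using D(1) s1 sub by (intro V_mono) auto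
    then show ?thesis using D(2) V_nonneg[OF s1] by simp
  qed
  then have "(\<lambda>n. - K * V (space M - E n)) \<longlonglongrightarrow> - K * 0" using lim by (intro tendsto_mult_left) simp
  then show ?thesis using bnd by (intro LIMSEQ_le_const2[of _ 0]) auto
qed

end

lemma antitone_integrable:
  fixes g :: "real \<Rightarrow> real"
  assumes anti: "\<And>s t. s \<le> t \<Longrightarrow> g t \<le> g s" and g01: "\<And>t. 0 \<le> g t" "\<And>t. g t \<le> 1"
  shows "set_integrable lborel {x..y} g" "g integrable_on {x..y}"
    "(LINT t:{x..y}|lborel. g t) = integral {x..y} g"
proof -
  have "mono (\<lambda>t. - g t)" using anti unfolding mono_def by simp
  then have "(\<lambda>t. - g t) \<in> borel_measurable borel" by (rule borel_measurable_mono)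
  then have gm: "g \<in> borel_measurable borel" using borel_measurable_uminus by fastforce
  have c: "set_integrable lborel {x..y} (\<lambda>_. 1::real)"
    by (rule borel_integrable_atLeastAtMost') simp
  show si: "set_integrable lborel {x..y} g"
  proof (rule set_integrable_bound[OF c])
    show "set_borel_measurable lborel {x..y} g"
      unfolding set_borel_measurable_def using gm by measurable
    show "AE t in lborel. t \<in> {x..y} \<longrightarrow> norm (g t) \<le> norm (1::real)"
      using g01 by auto
  qed
  show "g integrable_on {x..y}" "(LINT t:{x..y}|lborel. g t) = integral {x..y} g"
    using set_borel_integral_eq_integral[OF si] by auto
qed

lemma antitone_int_interval:
  fixes g :: "real \<Rightarrow> real"
  assumes anti: "\<And>s t. s \<le> t \<Longrightarrow> g t \<le> g s" and g01: "\<And>t. 0 \<le> g t" "\<And>t. g t \<le> 1"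
    and x: "x \<le> y"
  shows "(y - x) * g y \<le> integral {x..y} g" "integral {x..y} g \<le> (y - x) * g x"
proof -
  have gi: "g integrable_on {x..y}" using antitone_integrable[where g=g, OF anti g01] by blast
  have "integral {x..y} (\<lambda>_. g y) \<le> integral {x..y} g"
    using anti gi by (intro integral_le) auto
  then show "(y - x) * g y \<le> integral {x..y} g" using x by (simp add: content_real)
  have "integral {x..y} g \<le> integral {x..y} (\<lambda>_. g x)"
    using anti gi by (intro integral_le) auto
  then show "integral {x..y} g \<le> (y - x) * g x" using x by (simp add: content_real)
qed

lemma riemann_bounds:
  fixes g :: "real \<Rightarrow> real"
  assumes anti: "\<And>s t. s \<le> t \<Longrightarrow> g t \<le> g s" and g01: "\<And>t. 0 \<le> g t" "\<And>t. g t \<le> 1"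
    and d: "0 < d"
  shows "d * (\<Sum>j<m. g (a + (real j + 1) * d)) \<le> integral {a..a + real m * d} g
       \<and> integral {a..a + real m * d} g \<le> d * (\<Sum>j<m. g (a + real j * d))"
proof (induction m)
  case 0
  then show ?case by simp
next
  case (Suc m)
  have gi: "g integrable_on {a..a + real (Suc m) * d}" using antitone_integrable[where g=g, OF anti g01] by blast
  have comb: "integral {a..a + real m * d} g + integral {a + real m * d..a + real (Suc m) * d} g
      = integral {a..a + real (Suc m) * d} g"
  proof (rule Henstock_Kurzweil_Integration.integral_combine)
    show "a \<le> a + real m * d" using d by simp
    show "a + real m * d \<le> a + real (Suc m) * d" using d by simp
    show "g integrable_on {a..a + real (Suc m) * d}" using gi .
  qed
  have le: "a + real m * d \<le> a + real (Suc m) * d" using d by simp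
  have diff: "(a + real (Suc m) * d) - (a + real m * d) = d" by (simp add: algebra_simps)
  have e1: "a + real (Suc m) * d = a + (real m + 1) * d" by simp
  have i1: "d * g (a + (real m + 1) * d) \<le> integral {a + real m * d..a + real (Suc m) * d} g"
    using antitone_int_interval(1)[where g=g, OF anti g01 le] by (simp add: algebra_simps)
  have i2: "integral {a + real m * d..a + real (Suc m) * d} g \<le> d * g (a + real m * d)"
    using antitone_int_interval(2)[where g=g, OF anti g01 le] by (simp add: algebra_simps)
  show ?case using Suc.IH comb i1 i2 by (simp add: algebra_simps)
qed

lemma choquet_eval:
  fixes g :: "real \<Rightarrow> real"
  assumes anti: "\<And>s t. s \<le> t \<Longrightarrow> g t \<le> g s" and g01: "\<And>t. 0 \<le> g t" "\<And>t. g t \<le> 1"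
    and ab: "a \<le> 0" "0 \<le> b" and ga: "\<And>t. t \<le> a \<Longrightarrow> g t = 1" and gb: "\<And>t. b \<le> t \<Longrightarrow> g t = 0"
  shows "(LINT t:{0..}|lborel. g t) + (LINT t:{..0}|lborel. g t - 1) = a + integral {a..b} g"
proof -
  have e1: "(LINT t:{0..}|lborel. g t) = (LINT t:{0..b}|lborel. g t)"
  proof -
    have "(\<lambda>t. indicator {0..} t *\<^sub>R g t) = (\<lambda>t. indicator {0..b} t *\<^sub>R g t)"
      using gb by (auto simp: indicator_def fun_eq_iff)
    then show ?thesis unfolding set_lebesgue_integral_def by simp
  qed
  have e2: "(LINT t:{..0}|lborel. g t - 1) = (LINT t:{a..0}|lborel. g t - 1)"
  proof -
    have "(\<lambda>t. indicator {..0} t *\<^sub>R (g t - 1)) = (\<lambda>t. indicator {a..0} t *\<^sub>R (g t - 1))"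
      using ga by (auto simp: indicator_def fun_eq_iff)
    then show ?thesis unfolding set_lebesgue_integral_def by simp
  qed
  have i1: "(LINT t:{0..b}|lborel. g t) = integral {0..b} g"
    using antitone_integrable[where g=g, OF anti g01] by blast
  have "(LINT t:{a..0}|lborel. g t - 1) = (LINT t:{a..0}|lborel. g t) - (LINT t:{a..0}|lborel. 1)"
  proof (rule set_integral_diff)
    show "set_integrable lborel {a..0} g" using antitone_integrable[where g=g, OF anti g01] by blast
    show "set_integrable lborel {a..0} (\<lambda>_. 1::real)" by (rule borel_integrable_atLeastAtMost') simp
  qed
  also have "(LINT t:{a..0}|lborel. (1::real)) = integral {a..0} (\<lambda>_. 1::real)"
    using set_borel_integral_eq_integral(2)[OF borel_integrable_atLeastAtMost'[of a 0 "\<lambda>_. 1::real"]] by simp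
  also have "\<dots> = - a" using ab by (simp add: content_real)
  also have "(LINT t:{a..0}|lborel. g t) = integral {a..0} g"
    using antitone_integrable[where g=g, OF anti g01] by blast
  finally have i2: "(LINT t:{a..0}|lborel. g t - 1) = integral {a..0} g + a" by simp
  have "integral {a..0} g + integral {0..b} g = integral {a..b} g"
    using ab by (intro Henstock_Kurzweil_Integration.integral_combine antitone_integrable(2)[where g=g, OF anti g01]) auto
  then show ?thesis using e1 e2 i1 i2 by simp
qed

lemma count_up:
  fixes d a x :: real
  assumes d: "0 < d" and x: "a \<le> x"
  shows "min (x - a) (real m * d) \<le> d * (\<Sum>j<m. if a + real j * d \<le> x then 1 else 0)"
proof (induction m)
  case 0 then show ?case using x by simp
next
  case (Suc m)
  show ?case
  proof (cases "a + real m * d \<le> x")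
    case True
    then have "min (x - a) (real m * d) = real m * d" by simp
    then show ?thesis using Suc True by (simp add: algebra_simps)
  next
    case False
    then have "min (x - a) (real m * d) = x - a" by simp
    moreover have "min (x - a) (real (Suc m) * d) \<le> x - a" by simp
    ultimately show ?thesis using Suc False by simp
  qed
qed

lemma count_lo:
  fixes d a x :: real
  assumes d: "0 < d" and x: "a \<le> x"
  shows "d * (\<Sum>j<m. if a + (real j + 1) * d \<le> x then 1 else 0) \<le> min (x - a) (real m * d)"
proof (induction m)
  case 0 then show ?case using x by simp
next
  case (Suc m)
  show ?case
  proof (cases "a + (real m + 1) * d \<le> x")
    case True
    have "d * (\<Sum>j<Suc m. if a + (real j + 1) * d \<le> x then 1 else 0) \<le> min (x - a) (real m * d) + d"
      using Suc True by (simp add: algebra_simps)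
    also have "\<dots> \<le> real m * d + d" by simp
    finally show ?thesis using True by (simp add: algebra_simps)
  next
    case False
    have "d * (\<Sum>j<Suc m. if a + (real j + 1) * d \<le> x then 1 else 0) = d * (\<Sum>j<m. if a + (real j + 1) * d \<le> x then 1 else 0)"
      using False by simp
    also have "\<dots> \<le> min (x - a) (real m * d)" using Suc .
    also have "\<dots> \<le> min (x - a) (real (Suc m) * d)" using d by (intro min.mono) auto
    finally show ?thesis .
  qed
qed

context capL begin

lemma L_ind_lower: "A \<in> sets M \<Longrightarrow> 1 - V (space M - A) \<le> L (indicator A)"
proof -
  assume A: "A \<in> sets M"
  have "L (\<lambda>_. 1) = L (\<lambda>\<omega>. indicator A \<omega> + indicator (space M - A) \<omega>)"
    using sets.sets_into_space[OF A] by (intro L_cong BS_const BS_add BS_ind) (auto simp: indicator_def)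
  also have "\<dots> = L (indicator A) + L (indicator (space M - A))" by (intro L_add BS_ind)
  finally have "1 = L (indicator A) + L (indicator (space M - A))" using L_const by simp
  moreover have "L (indicator (space M - A)) \<le> V (space M - A)" using A by (intro L_ind) auto
  ultimately show ?thesis by simp
qed

lemma L_step:
  fixes c d :: real and E :: "nat \<Rightarrow> 'a set"
  shows "L (\<lambda>\<omega>. c + d * (\<Sum>j<m. indicator (E j) \<omega>)) = c + d * (\<Sum>j<m. L (indicator (E j)))"
proof -
  have s: "(\<lambda>\<omega>. \<Sum>j<m. indicator (E j) \<omega>) \<in> BS" by (intro BS_sum BS_ind)
  have "L (\<lambda>\<omega>. c + d * (\<Sum>j<m. indicator (E j) \<omega>)) = L (\<lambda>_. c) + L (\<lambda>\<omega>. d * (\<Sum>j<m. indicator (E j) \<omega>))"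
    using L_add[OF BS_const BS_scale[OF s]] by simp
  also have "\<dots> = c + d * L (\<lambda>\<omega>. \<Sum>j<m. indicator (E j) \<omega>)" using L_const L_scale[OF s] by simp
  also have "L (\<lambda>\<omega>. \<Sum>j<m. indicator (E j) \<omega>) = (\<Sum>j<m. L (indicator (E j)))" by (intro L_sum BS_ind)
  finally show ?thesis .
qed

lemma choquet_bounds:
  assumes \<xi>: "\<xi> \<in> borel_measurable M" and K: "\<And>\<omega>. \<omega> \<in> space M \<Longrightarrow> \<bar>\<xi> \<omega>\<bar> \<le> K"
  shows "L \<xi> \<le> choquet_integral M V \<xi>" "choquet_integral M (conjugate_capacity M V) \<xi> \<le> L \<xi>"
proof -
  obtain \<omega>0 where \<omega>0: "\<omega>0 \<in> space M" using space_ne by blast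
  have K0: "0 \<le> K" using K[OF \<omega>0] by linarith
  define a where "a = - K - 1"
  define b where "b = K + 1"
  define lev where "lev t = {\<omega>\<in>space M. t \<le> \<xi> \<omega>}" for t
  have lev_sets: "lev t \<in> sets M" for t unfolding lev_def using \<xi> by measurable
  have lev_mono: "s \<le> t \<Longrightarrow> lev t \<subseteq> lev s" for s t unfolding lev_def by auto
  have lev_a: "t \<le> a \<Longrightarrow> lev t = space M" for t unfolding lev_def a_def using K by (force simp: abs_le_iff)
  have lev_b: "b \<le> t \<Longrightarrow> lev t = {}" for t unfolding lev_def b_def using K by (force simp: abs_le_iff)
  define G where "G t = V (lev t)" for t
  define H where "H t = 1 - V (space M - lev t)" for t
  have G_anti: "s \<le> t \<Longrightarrow> G t \<le> G s" for s t unfolding G_def using lev_mono lev_sets by (intro V_mono) auto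
  have H_anti: "s \<le> t \<Longrightarrow> H t \<le> H s" for s t unfolding H_def using lev_mono lev_sets
    by (simp add: V_mono Diff_mono sets.Diff)
  have G01: "0 \<le> G t" "G t \<le> 1" for t unfolding G_def using V_nonneg V_le1 lev_sets by auto
  have H01: "0 \<le> H t" "H t \<le> 1" for t unfolding H_def using V_nonneg V_le1 lev_sets sets.Diff sets.top
    by (smt (verit))+
  have Ga: "t \<le> a \<Longrightarrow> G t = 1" for t unfolding G_def using lev_a by simp
  have Gb: "b \<le> t \<Longrightarrow> G t = 0" for t unfolding G_def using lev_b by simp
  have Ha: "t \<le> a \<Longrightarrow> H t = 1" for t unfolding H_def using lev_a by simp
  have Hb: "b \<le> t \<Longrightarrow> H t = 0" for t unfolding H_def using lev_b by simp
  have ab: "a \<le> 0" "0 \<le> b" "a < b" unfolding a_def b_def using K0 by auto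
  have chV: "choquet_integral M V \<xi> = a + integral {a..b} G"
    unfolding choquet_integral_def
    using choquet_eval[of G a b, OF G_anti G01 ab(1,2) Ga Gb] unfolding G_def lev_def by simp
  have chv: "choquet_integral M (conjugate_capacity M V) \<xi> = a + integral {a..b} H"
    unfolding choquet_integral_def conjugate_capacity_def
    using choquet_eval[of H a b, OF H_anti H01 ab(1,2) Ha Hb] unfolding H_def lev_def by simp
  have \<xi>BS: "\<xi> \<in> BS" using K by (rule BS_I)
  have ind_eq: "indicator (lev t) \<omega> = (if t \<le> \<xi> \<omega> then 1 else (0::real))" if "\<omega> \<in> space M" for t \<omega>
    using that unfolding lev_def by (simp add: indicator_def)
  have xi_range: "a \<le> \<xi> \<omega>" "\<xi> \<omega> < b" if "\<omega> \<in> space M" for \<omega>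
    using K[OF that] unfolding a_def b_def by (auto simp: abs_le_iff)
  have up: "L \<xi> \<le> choquet_integral M V \<xi> + (b - a) / real m" if m: "m \<ge> 1" for m
  proof -
    define d where "d = (b - a) / real m"
    have d: "0 < d" unfolding d_def using m ab by simp
    have md: "a + real m * d = b" unfolding d_def using m by simp
    have pw: "\<xi> \<omega> \<le> a + d * (\<Sum>j<m. indicator (lev (a + real j * d)) \<omega>)" if w: "\<omega> \<in> space M" for \<omega>
    proof -
      have "min (\<xi> \<omega> - a) (real m * d) \<le> d * (\<Sum>j<m. if a + real j * d \<le> \<xi> \<omega> then 1 else 0)"
        using count_up[OF d xi_range(1)[OF w]] .
      moreover have "min (\<xi> \<omega> - a) (real m * d) = \<xi> \<omega> - a" using xi_range(2)[OF w] md by simp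
      moreover have "(\<Sum>j<m. indicator (lev (a + real j * d)) \<omega>) = (\<Sum>j<m. if a + real j * d \<le> \<xi> \<omega> then 1 else (0::real))"
        using ind_eq[OF w] by simp
      ultimately show ?thesis by simp
    qed
    have "L \<xi> \<le> L (\<lambda>\<omega>. a + d * (\<Sum>j<m. indicator (lev (a + real j * d)) \<omega>))"
      using pw by (intro L_mono \<xi>BS BS_add BS_const BS_scale BS_sum BS_ind) auto
    also have "\<dots> = a + d * (\<Sum>j<m. L (indicator (lev (a + real j * d))))" by (rule L_step)
    also have "\<dots> \<le> a + d * (\<Sum>j<m. G (a + real j * d))"
      unfolding G_def using d lev_sets by (intro add_left_mono mult_left_mono sum_mono L_ind) auto
    also have "(\<Sum>j<m. G (a + real j * d)) = (\<Sum>j<m. G (a + (real j + 1) * d)) + G a - G b"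
    proof -
      have "(\<Sum>j<m. G (a + real (Suc j) * d) - G (a + real j * d)) = G (a + real m * d) - G (a + real 0 * d)"
        by (rule sum_lessThan_telescope)
      then show ?thesis using md by (simp add: sum_subtractf algebra_simps)
    qed
    also have "G a = 1" using Ga by simp
    also have "G b = 0" using Gb by simp
    also have "d * (\<Sum>j<m. G (a + (real j + 1) * d)) \<le> integral {a..b} G"
      using riemann_bounds[where g=G and m=m and a=a, OF G_anti G01 d] md by simp
    then have "a + d * ((\<Sum>j<m. G (a + (real j + 1) * d)) + 1 - 0) \<le> a + integral {a..b} G + d"
      by (simp add: algebra_simps)
    finally show ?thesis using chV unfolding d_def by simp
  qed
  show "L \<xi> \<le> choquet_integral M V \<xi>"
  proof (rule ccontr)
    assume "\<not> ?thesis"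
    then have pos: "0 < L \<xi> - choquet_integral M V \<xi>" by simp
    obtain m :: nat where m: "(b - a) / (L \<xi> - choquet_integral M V \<xi>) < real m" using reals_Archimedean2 by blast
    have "0 < (b - a) / (L \<xi> - choquet_integral M V \<xi>)" using pos ab by simp
    then have m1: "m \<ge> 1" using m by simp
    have "(b - a) < real m * (L \<xi> - choquet_integral M V \<xi>)" using m pos by (simp add: field_simps)
    moreover have "real m * (L \<xi> - choquet_integral M V \<xi>) \<le> b - a" using up[OF m1] m1 by (simp add: field_simps)
    ultimately show False by simp
  qed
  have lo: "choquet_integral M (conjugate_capacity M V) \<xi> \<le> L \<xi> + (b - a) / real m" if m: "m \<ge> 1" for m
  proof -
    define d where "d = (b - a) / real m"
    have d: "0 < d" unfolding d_def using m ab by simp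
    have md: "a + real m * d = b" unfolding d_def using m by simp
    have pw: "a + d * (\<Sum>j<m. indicator (lev (a + (real j + 1) * d)) \<omega>) \<le> \<xi> \<omega>" if w: "\<omega> \<in> space M" for \<omega>
    proof -
      have "d * (\<Sum>j<m. if a + (real j + 1) * d \<le> \<xi> \<omega> then 1 else 0) \<le> min (\<xi> \<omega> - a) (real m * d)"
        using count_lo[OF d xi_range(1)[OF w]] .
      moreover have "min (\<xi> \<omega> - a) (real m * d) \<le> \<xi> \<omega> - a" by simp
      moreover have "(\<Sum>j<m. indicator (lev (a + (real j + 1) * d)) \<omega>) = (\<Sum>j<m. if a + (real j + 1) * d \<le> \<xi> \<omega> then 1 else (0::real))"
        using ind_eq[OF w] by simp
      ultimately show ?thesis by simp
    qed
    have "a + d * (\<Sum>j<m. H (a + (real j + 1) * d)) \<le> a + d * (\<Sum>j<m. L (indicator (lev (a + (real j + 1) * d))))"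
      unfolding H_def using d lev_sets by (intro add_left_mono mult_left_mono sum_mono L_ind_lower) auto
    also have "\<dots> = L (\<lambda>\<omega>. a + d * (\<Sum>j<m. indicator (lev (a + (real j + 1) * d)) \<omega>))" by (rule L_step[symmetric])
    also have "\<dots> \<le> L \<xi>"
      using pw by (intro L_mono \<xi>BS BS_add BS_const BS_scale BS_sum BS_ind) auto
    finally have 1: "a + d * (\<Sum>j<m. H (a + (real j + 1) * d)) \<le> L \<xi>" .
    have "(\<Sum>j<m. H (a + real j * d)) = (\<Sum>j<m. H (a + (real j + 1) * d)) + H a - H b"
    proof -
      have "(\<Sum>j<m. H (a + real (Suc j) * d) - H (a + real j * d)) = H (a + real m * d) - H (a + real 0 * d)"
        by (rule sum_lessThan_telescope)
      then show ?thesis using md by (simp add: sum_subtractf algebra_simps)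
    qed
    moreover have "H a = 1" "H b = 0" using Ha Hb by auto
    moreover have "integral {a..b} H \<le> d * (\<Sum>j<m. H (a + real j * d))"
      using riemann_bounds[where g=H and m=m and a=a, OF H_anti H01 d] md by simp
    ultimately have "integral {a..b} H \<le> d * (\<Sum>j<m. H (a + (real j + 1) * d)) + d"
      by (simp add: algebra_simps)
    then show ?thesis using chv 1 unfolding d_def by simp
  qed
  show "choquet_integral M (conjugate_capacity M V) \<xi> \<le> L \<xi>"
  proof (rule ccontr)
    assume "\<not> ?thesis"
    then have pos: "0 < choquet_integral M (conjugate_capacity M V) \<xi> - L \<xi>" by simp
    obtain m :: nat where m: "(b - a) / (choquet_integral M (conjugate_capacity M V) \<xi> - L \<xi>) < real m"
      using reals_Archimedean2 by blast
    have "0 < (b - a) / (choquet_integral M (conjugate_capacity M V) \<xi> - L \<xi>)" using pos ab by simp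
    then have m1: "m \<ge> 1" using m by simp
    have "(b - a) < real m * (choquet_integral M (conjugate_capacity M V) \<xi> - L \<xi>)" using m pos by (simp add: field_simps)
    moreover have "real m * (choquet_integral M (conjugate_capacity M V) \<xi> - L \<xi>) \<le> b - a"
      using lo[OF m1] m1 by (simp add: field_simps)
    ultimately show False by simp
  qed
qed

end

context capL begin

definition U :: "('a \<Rightarrow> real) \<Rightarrow> 'a set" where
  "U g = {\<omega>\<in>space M. \<forall>C::nat. \<exists>n. real C < Sn n g \<omega>}"

lemma ub_iff: "(\<forall>C::nat. \<exists>n. real C < u n) \<longleftrightarrow> (\<forall>C::real. \<exists>n. C < u n)"
proof
  assume H: "\<forall>C::nat. \<exists>n. real C < u n"
  show "\<forall>C::real. \<exists>n. C < u n"
  proof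
    fix C :: real
    obtain N :: nat where "C < real N" using reals_Archimedean2 by blast
    moreover obtain n where "real N < u n" using H by blast
    ultimately show "\<exists>n. C < u n" by (meson less_trans)
  qed
qed auto

lemma U_sets: "g \<in> borel_measurable M \<Longrightarrow> U g \<in> sets M"
proof -
  assume g: "g \<in> borel_measurable M"
  have s: "{\<omega>\<in>space M. real C < Sn n g \<omega>} \<in> sets M" for C n
  proof -
    have "{\<omega>\<in>space M. real C < Sn n g \<omega>} = Sn n g -` {real C<..} \<inter> space M" by auto
    also have "\<dots> \<in> sets M" using Sn_meas[OF g] by (rule measurable_sets) simp
    finally show ?thesis .
  qed
  have "U g = (\<Inter>C::nat. \<Union>n::nat. {\<omega>\<in>space M. real C < Sn n g \<omega>})" unfolding U_def by blast
  also have "\<dots> \<in> sets M" using s by (intro sets.countable_INT' sets.countable_UN') auto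
  finally show ?thesis .
qed

lemma U_inv:
  assumes K: "\<And>\<omega>. \<omega> \<in> space M \<Longrightarrow> \<bar>g \<omega>\<bar> \<le> K"
  shows "\<theta> -` U g \<inter> space M = U g"
proof -
  have eq: "(\<theta> \<omega> \<in> U g) \<longleftrightarrow> (\<omega> \<in> U g)" if w: "\<omega> \<in> space M" for \<omega>
  proof -
    have tw: "\<theta> \<omega> \<in> space M" using measurable_space[OF thmeas w] .
    have "(\<forall>C::real. \<exists>n. C < Sn n g (\<theta> \<omega>)) \<longleftrightarrow> (\<forall>C::real. \<exists>n. C < Sn n g \<omega>)"
    proof
      assume H: "\<forall>C::real. \<exists>n. C < Sn n g (\<theta> \<omega>)"
      show "\<forall>C::real. \<exists>n. C < Sn n g \<omega>"
      proof
        fix C :: real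
        obtain n where "C + K < Sn n g (\<theta> \<omega>)" using H by blast
        then have "C < Sn (Suc n) g \<omega>" using K[OF w] by (simp add: Sn_Suc abs_le_iff)
        then show "\<exists>n. C < Sn n g \<omega>" by blast
      qed
    next
      assume H: "\<forall>C::real. \<exists>n. C < Sn n g \<omega>"
      show "\<forall>C::real. \<exists>n. C < Sn n g (\<theta> \<omega>)"
      proof
        fix C :: real
        obtain n where n: "max (C + K) 0 < Sn n g \<omega>" using H by blast
        then obtain j where j: "n = Suc j" by (cases n) (auto simp: Sn_def)
        have "C < Sn j g (\<theta> \<omega>)" using n K[OF w] unfolding j by (simp add: Sn_Suc abs_le_iff)
        then show "\<exists>n. C < Sn n g (\<theta> \<omega>)" by blast
      qed
    qed
    moreover have "(\<theta> \<omega> \<in> U g) \<longleftrightarrow> (\<forall>C::real. \<exists>n. C < Sn n g (\<theta> \<omega>))"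
      using tw ub_iff[of "\<lambda>n. Sn n g (\<theta> \<omega>)"] unfolding U_def by blast
    moreover have "(\<omega> \<in> U g) \<longleftrightarrow> (\<forall>C::real. \<exists>n. C < Sn n g \<omega>)"
      using w ub_iff[of "\<lambda>n. Sn n g \<omega>"] unfolding U_def by blast
    ultimately show ?thesis by blast
  qed
  have Us: "U g \<subseteq> space M" unfolding U_def by blast
  show ?thesis
  proof (intro set_eqI iffI)
    fix x assume "x \<in> \<theta> -` U g \<inter> space M"
    then show "x \<in> U g" using eq by blast
  next
    fix x assume x: "x \<in> U g"
    then have "x \<in> space M" using Us by blast
    then show "x \<in> \<theta> -` U g \<inter> space M" using eq x by blast
  qed
qed

lemma U_dichotomy:
  assumes erg: "ergodic_capacity M V \<theta>" and g: "g \<in> borel_measurable M"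
    and K: "\<And>\<omega>. \<omega> \<in> space M \<Longrightarrow> \<bar>g \<omega>\<bar> \<le> K"
  shows "V (U g) = 0 \<or> 0 \<le> L g"
proof -
  have "\<theta> -` U g \<inter> space M = U g \<longrightarrow> (V (U g) = 0 \<or> V (U g) = 1) \<and> (V (U g) = 0 \<or> V (space M - U g) = 0)"
    by (rule bspec[OF erg[unfolded ergodic_capacity_def] U_sets[OF g]])
  then have "V (U g) = 0 \<or> V (space M - U g) = 0" using U_inv[OF K] by simp
  moreover have "0 \<le> L g" if "V (space M - U g) = 0"
  proof (rule garsia[OF g K U_sets[OF g] that])
    fix \<omega> assume "\<omega> \<in> U g"
    then have "\<forall>C::nat. \<exists>n. real C < Sn n g \<omega>" unfolding U_def by blast
    then obtain n where "real (0::nat) < Sn n g \<omega>" by blast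
    then show "\<exists>n. 0 < Sn n g \<omega>" by auto
  qed
  ultimately show ?thesis by blast
qed

lemma not_U:
  assumes "\<omega> \<in> space M" "\<omega> \<notin> U g"
  shows "\<exists>C. \<forall>n. Sn n g \<omega> \<le> C"
proof -
  have "\<not> (\<forall>C::real. \<exists>n. C < Sn n g \<omega>)"
    using assms ub_iff[of "\<lambda>n. Sn n g \<omega>"] unfolding U_def by blast
  then show ?thesis by (meson not_less)
qed

end

theorem theorem7:
  fixes M :: "'a measure" and V :: "'a set \<Rightarrow> real"
    and \<theta> :: "'a \<Rightarrow> 'a" and \<xi> :: "'a \<Rightarrow> real"
  assumes "capacity M V"
    and "continuous_capacity M V"
    and "concave_capacity M V"
    and "\<theta> \<in> M \<rightarrow>\<^sub>M M"
    and "preserves_capacity M V \<theta>"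
    and "ergodic_capacity M V \<theta>"
    and "\<xi> \<in> borel_measurable M"
    and "\<exists>K. \<forall>\<omega>\<in>space M. \<bar>\<xi> \<omega>\<bar> \<le> K"
  shows "\<exists>c. (\<exists>N\<in>sets M. V N = 0 \<and>
              (\<forall>\<omega>\<in>space M - N.
                 (\<lambda>n. (\<Sum>k<n. \<xi> ((\<theta> ^^ k) \<omega>)) / real n) \<longlonglongrightarrow> c))
          \<and> choquet_integral M (conjugate_capacity M V) \<xi> \<le> c
          \<and> c \<le> choquet_integral M V \<xi>"
proof -
  interpret cap M V \<theta> using assms(1-5) by unfold_locales
  obtain L where L: "\<forall>f\<in>BS. \<forall>g\<in>BS. L (\<lambda>x. f x + g x) = L f + L g"
    "\<forall>f\<in>BS. \<forall>r. L (\<lambda>x. r * f x) = r * L f" "\<forall>f\<in>BS. L f \<le> pp f"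
    using exists_L by blast
  interpret capL M V \<theta> L using L by unfold_locales auto
  have erg: "ergodic_capacity M V \<theta>" by (rule assms(6))
  have \<xi>m: "\<xi> \<in> borel_measurable M" by (rule assms(7))
  obtain K where K: "\<And>\<omega>. \<omega> \<in> space M \<Longrightarrow> \<bar>\<xi> \<omega>\<bar> \<le> K" using assms(8) by blast
  have \<xi>BS: "\<xi> \<in> BS" using K by (rule BS_I)
  define c where "c = L \<xi>"
  define gu where "gu q = (\<lambda>\<omega>. \<xi> \<omega> - real_of_rat q)" for q
  define gl where "gl q = (\<lambda>\<omega>. real_of_rat q - \<xi> \<omega>)" for q
  have gu_m: "gu q \<in> borel_measurable M" for q unfolding gu_def using \<xi>m by measurable
  have gl_m: "gl q \<in> borel_measurable M" for q unfolding gl_def using \<xi>m by measurable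
  have gu_K: "\<bar>gu q \<omega>\<bar> \<le> K + \<bar>real_of_rat q\<bar>" if "\<omega> \<in> space M" for q \<omega>
    unfolding gu_def using K[OF that] by linarith
  have gl_K: "\<bar>gl q \<omega>\<bar> \<le> K + \<bar>real_of_rat q\<bar>" if "\<omega> \<in> space M" for q \<omega>
    unfolding gl_def using K[OF that] by linarith
  have Lgu: "L (gu q) = c - real_of_rat q" for q
    unfolding gu_def c_def using L_diff[OF \<xi>BS BS_const] L_const by simp
  have Lgl: "L (gl q) = real_of_rat q - c" for q
    unfolding gl_def c_def using L_diff[OF BS_const \<xi>BS] L_const by simp
  define N1 where "N1 q = (if c < real_of_rat q then U (gu q) else {})" for q
  define N2 where "N2 q = (if real_of_rat q < c then U (gl q) else {})" for q
  define N where "N = (\<Union>q\<in>(UNIV::rat set). N1 q \<union> N2 q)"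
  have N1s: "N1 q \<in> sets M" for q unfolding N1_def using U_sets[OF gu_m] by auto
  have N2s: "N2 q \<in> sets M" for q unfolding N2_def using U_sets[OF gl_m] by auto
  have N10: "V (N1 q) = 0" for q
  proof (cases "c < real_of_rat q")
    case True
    have "V (U (gu q)) = 0 \<or> 0 \<le> L (gu q)" using U_dichotomy[OF erg gu_m gu_K] by blast
    then show ?thesis using True Lgu unfolding N1_def by auto
  qed (simp add: N1_def)
  have N20: "V (N2 q) = 0" for q
  proof (cases "real_of_rat q < c")
    case True
    have "V (U (gl q)) = 0 \<or> 0 \<le> L (gl q)" using U_dichotomy[OF erg gl_m gl_K] by blast
    then show ?thesis using True Lgl unfolding N2_def by auto
  qed (simp add: N2_def)
  have Ns: "N \<in> sets M" unfolding N_def using N1s N2s by (intro sets.countable_UN') auto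
  have N0: "V N = 0" unfolding N_def
  proof (rule null_UN_countable)
    show "countable (UNIV :: rat set)" by simp
    show "(UNIV :: rat set) \<noteq> {}" by simp
    fix q :: rat
    show "N1 q \<union> N2 q \<in> sets M" using N1s N2s by auto
    have "V (N1 q \<union> N2 q) \<le> V (N1 q) + V (N2 q)" using N1s N2s by (intro V_subadd)
    then show "V (N1 q \<union> N2 q) = 0" using N10 N20 V_nonneg[of "N1 q \<union> N2 q"] N1s N2s by auto
  qed
  have conv: "(\<lambda>n. (\<Sum>k<n. \<xi> ((\<theta> ^^ k) \<omega>)) / real n) \<longlonglongrightarrow> c" if w: "\<omega> \<in> space M - N" for \<omega>
  proof (rule LIMSEQ_I)
    fix r :: real assume r: "0 < r"
    have ws: "\<omega> \<in> space M" using w by blast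
    obtain q1 where q1: "q1 \<in> \<rat>" "c < q1" "q1 < c + r / 2" using Rats_dense_in_real[of c "c + r/2"] r by auto
    obtain q1' where q1': "q1 = real_of_rat q1'" using q1(1) Rats_cases by blast
    obtain q2 where q2: "q2 \<in> \<rat>" "c - r / 2 < q2" "q2 < c" using Rats_dense_in_real[of "c - r/2" c] r by auto
    obtain q2' where q2': "q2 = real_of_rat q2'" using q2(1) Rats_cases by blast
    have "\<omega> \<notin> N1 q1'" using w unfolding N_def by blast
    then have "\<omega> \<notin> U (gu q1')" using q1 q1' unfolding N1_def by auto
    then obtain C1 where C1: "\<And>n. Sn n (gu q1') \<omega> \<le> C1" using not_U[OF ws] by blast
    have "\<omega> \<notin> N2 q2'" using w unfolding N_def by blast
    then have "\<omega> \<notin> U (gl q2')" using q2 q2' unfolding N2_def by auto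
    then obtain C2 where C2: "\<And>n. Sn n (gl q2') \<omega> \<le> C2" using not_U[OF ws] by blast
    have h1: "Sn n \<xi> \<omega> \<le> real n * q1 + C1" for n
      using C1[of n] unfolding gu_def Sn_def q1' by (simp add: sum_subtractf)
    have h2: "real n * q2 - C2 \<le> Sn n \<xi> \<omega>" for n
      using C2[of n] unfolding gl_def Sn_def q2' by (simp add: sum_subtractf)
    obtain no :: nat where no: "(\<bar>C1\<bar> + \<bar>C2\<bar>) * 2 / r < real no" using reals_Archimedean2 by blast
    show "\<exists>no. \<forall>n\<ge>no. norm ((\<Sum>k<n. \<xi> ((\<theta> ^^ k) \<omega>)) / real n - c) < r"
    proof (intro exI[of _ "Suc no"] allI impI)
      fix n assume n: "Suc no \<le> n"
      have npos: "0 < real n" using n by simp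
      have "(\<bar>C1\<bar> + \<bar>C2\<bar>) * 2 / r < real n" using no n by linarith
      then have nr: "(\<bar>C1\<bar> + \<bar>C2\<bar>) * 2 < real n * r" using r by (simp add: field_simps)
      have a1: "real n * (q1 - c) \<le> real n * (r / 2)" using q1 npos by (intro mult_left_mono) auto
      have a2: "real n * (c - q2) \<le> real n * (r / 2)" using q2 npos by (intro mult_left_mono) auto
      have "Sn n \<xi> \<omega> - real n * c < real n * r"
        using h1[of n] a1 nr by (simp add: algebra_simps)
      moreover have "real n * c - Sn n \<xi> \<omega> < real n * r"
        using h2[of n] a2 nr by (simp add: algebra_simps)
      ultimately have "\<bar>Sn n \<xi> \<omega> - real n * c\<bar> < real n * r" by linarith
      moreover have "\<bar>Sn n \<xi> \<omega> / real n - c\<bar> = \<bar>Sn n \<xi> \<omega> - real n * c\<bar> / real n"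
        using npos by (simp add: field_simps)
      ultimately have "\<bar>Sn n \<xi> \<omega> / real n - c\<bar> < r" using npos by (simp add: field_simps)
      then show "norm ((\<Sum>k<n. \<xi> ((\<theta> ^^ k) \<omega>)) / real n - c) < r" unfolding Sn_def by simp
    qed
  qed
  have cb: "choquet_integral M (conjugate_capacity M V) \<xi> \<le> c" "c \<le> choquet_integral M V \<xi>"
    using choquet_bounds[OF \<xi>m K] unfolding c_def by auto
  show ?thesis using Ns N0 conv cb by blast
qed

end
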